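(* Let $y\in\mathbb{R}^d$, $\lambda>0$, and $X=[x_1,\cdots,x_n]\in\mathbb{R}^{d\times n}$. Let $w^*=[w_1^*,\cdots,w_n^*]^T\in\mathbb{R}^n$ be the optimal solution to $$\min_{w\in\mathbb{R}^n}\ \tfrac{1}{2}\|y-Xw\|_2^2+\lambda\|X\,\mathrm{Diag}(w)\|_*.$$ If $x_i\rightarrow x_j$ (with $y$, $\lambda$ and the other columns of $X$ fixed), then $w_i^*\rightarrow w_j^*$, i.e., $w_i^*-w_j^*\to 0$.
   Context: $\mathrm{Diag}(w)$ is the diagonal matrix with diagonal $w$, and $\|\cdot\|_*$ is the nuclear norm (sum of singular values). *)

theory Defs
  imports Complex_Main "Jordan_Normal_Form.Char_Poly"
begin

definition Diag :: "real vec \<Rightarrow> real mat" where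
  "Diag w = mat (dim_vec w) (dim_vec w) (\<lambda>(i,j). if i = j then w $ i else 0)"

text \<open>Eigenvalues (with multiplicity) of A^T A, i.e. the squared singular values of A.
  A^T A is real symmetric, so its characteristic polynomial splits over the reals.\<close>
definition sq_singular_values :: "real mat \<Rightarrow> real list" where
  "sq_singular_values A =
     (SOME es. char_poly (transpose_mat A * A) = (\<Prod>e\<leftarrow>es. [:- e, 1:]))"

definition nuclear_norm :: "real mat \<Rightarrow> real" where
  "nuclear_norm A = sum_list (map sqrt (sq_singular_values A))"

definition trace_lasso_obj :: "real vec \<Rightarrow> real \<Rightarrow> real mat \<Rightarrow> real vec \<Rightarrow> real" where
  "trace_lasso_obj y lam X w =
     1/2 * ((y - X *\<^sub>v w) \<bullet> (y - X *\<^sub>v w)) + lam * nuclear_norm (X * Diag w)"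

end

theory Submission
  imports Defs "Jordan_Normal_Form.Schur_Decomposition"
begin

lemma sym_real_eigenvalue:
  fixes M :: "real mat"
  assumes M: "M \<in> carrier_mat n n" and n: "n > 0" and sym: "transpose_mat M = M"
  shows "\<exists>e. eigenvalue M e"
proof -
  define Mc where "Mc = map_mat complex_of_real M"
  have Mc: "Mc \<in> carrier_mat n n" using M by (simp add: Mc_def)
  obtain as where as: "char_poly Mc = (\<Prod> a \<leftarrow> as. [:- a, 1:])" "length as = n"
    using char_poly_factorized[OF Mc] by blast
  then obtain z zs where "as = z # zs" using n by (cases as) auto
  hence "poly (char_poly Mc) z = 0" using as(1) by simp
  hence "eigenvalue Mc z" using eigenvalue_root_char_poly[OF Mc] by simp
  then obtain v where ev: "eigenvector Mc v z" unfolding eigenvalue_def by blast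
  hence v: "v \<in> carrier_vec n" "v \<noteq> 0\<^sub>v n" "Mc *\<^sub>v v = z \<cdot>\<^sub>v v"
    unfolding eigenvector_def using Mc by auto
  define s where "s = (\<Sum>a<n. \<Sum>b<n. cnj (v $ a) * Mc $$ (a,b) * v $ b)"
  define t where "t = (\<Sum>a<n. cnj (v $ a) * v $ a)"
  have "s = (\<Sum>a<n. cnj (v $ a) * (Mc *\<^sub>v v) $ a)"
    unfolding s_def
    by (rule sum.cong, simp, insert Mc v(1), auto simp: scalar_prod_def sum_distrib_left 
        mult.assoc lessThan_atLeast0 intro!: sum.cong)
  also have "\<dots> = z * t" unfolding v(3) t_def using v
    by (auto simp: sum_distrib_left intro!: sum.cong)
  finally have szt: "s = z * t" .
  have "cnj s = (\<Sum>a<n. \<Sum>b<n. v $ a * Mc $$ (a,b) * cnj (v $ b))"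
    unfolding s_def using M by (simp add: Mc_def)
  also have "\<dots> = (\<Sum>b<n. \<Sum>a<n. v $ a * Mc $$ (a,b) * cnj (v $ b))"
    by (rule sum.swap)
  also have "\<dots> = s" unfolding s_def
  proof (intro sum.cong refl)
    fix b a assume "b \<in> {..<n}" "a \<in> {..<n}"
    hence "M $$ (a,b) = M $$ (b,a)" using arg_cong[OF sym, of "\<lambda>A. A $$ (b,a)"] M by auto
    thus "v $ a * Mc $$ (a,b) * cnj (v $ b) = cnj (v $ b) * Mc $$ (b,a) * v $ a"
      using \<open>b \<in> _\<close> \<open>a \<in> _\<close> M by (simp add: Mc_def)
  qed
  finally have "cnj s = s" .
  hence "Im (cnj s) = Im s" by simp
  hence Is: "Im s = 0" by simp
  have It: "Im t = 0" unfolding t_def by (simp add: Im_sum)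
  obtain a where a: "a < n" "v $ a \<noteq> 0" using v(1,2) by (metis carrier_vecD eq_vecI index_zero_vec(1,2))
  have Rt: "Re t > 0" unfolding t_def Re_sum
  proof -
    have "(\<Sum>b<n. Re (cnj (v $ b) * v $ b)) \<ge> Re (cnj (v $ a) * v $ a)"
      by (rule member_le_sum, insert a, auto)
    moreover have "Re (cnj (v $ a) * v $ a) > 0" using a(2)
      by (simp add: complex_eq_iff sum_power2_gt_zero_iff power2_eq_square[symmetric])
    ultimately show "(\<Sum>b<n. Re (cnj (v $ b) * v $ b)) > 0" by linarith
  qed
  have "Im z = 0" using szt Is It Rt by (simp add: complex_eq_iff)
  hence zr: "z = complex_of_real (Re z)" by (simp add: complex_eq_iff)
  have "poly (char_poly Mc) z = 0" by fact
  also have "char_poly Mc = map_poly complex_of_real (char_poly M)"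
    unfolding Mc_def by (rule of_real_hom.char_poly_hom[OF M])
  finally have "poly (char_poly M) (Re z) = 0" by (subst (asm) zr, simp)
  thus ?thesis using eigenvalue_root_char_poly[OF M] by blast
qed

lemma conj_real_vec[simp]: "conjugate (w :: real vec) = w"
  by (intro eq_vecI) auto

lemma self_sprod_nonneg: "(w :: real vec) \<bullet> w \<ge> 0"
  unfolding scalar_prod_def by (intro sum_nonneg) auto

lemma orth_completion:
  fixes u :: "real vec"
  assumes u: "u \<in> carrier_vec n" and uu: "u \<bullet> u = 1"
  shows "\<exists>W \<in> carrier_mat n n. transpose_mat W * W = 1\<^sub>m n \<and> col W 0 = u"
proof -
  have u0: "u \<noteq> 0\<^sub>v n" using uu u by auto
  interpret cof_vec_space n "TYPE(real)" .
  define b where "b = basis_completion u"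
  from basis_completion[OF u u0, folded b_def]
  have dist_b: "distinct b" 
    and indep: "\<not> lin_dep (set b)" and bc: "set b \<subseteq> carrier_vec n" and hdb: "hd b = u" 
    and len_b: "length b = n" by auto
  have n: "n > 0" using u0 u by (cases n, auto)
  from hdb len_b n obtain vs where bv: "b = u # vs" by (cases b, auto)
  define ws where "ws = gram_schmidt n b"
  from gram_schmidt_result[OF bc dist_b indep ws_def]
  have ws: "set ws \<subseteq> carrier_vec n" "corthogonal ws" "length ws = n" 
    by (auto simp: len_b)
  have hdws: "ws ! 0 = u" unfolding ws_def bv using u by (simp add: gram_schmidt_code)
  define ws' where "ws' = map (\<lambda>w. (1 / sqrt (w \<bullet> w)) \<cdot>\<^sub>v w) ws"
  define W where "W = mat_of_cols n ws'"
  have ws'c: "set ws' \<subseteq> carrier_vec n" using ws unfolding ws'_def by auto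
  have lws': "length ws' = n" using ws unfolding ws'_def by auto
  have W: "W \<in> carrier_mat n n" unfolding W_def using lws' by auto
  have colW: "col W a = ws' ! a" if "a < n" for a
    unfolding W_def using that ws'c lws' by (metis col_mat_of_cols nth_mem subsetD)
  have wsa: "ws ! a \<in> carrier_vec n" if "a < n" for a using ws that by auto
  have ortho: "ws ! a \<bullet> ws ! b = 0 \<longleftrightarrow> a \<noteq> b" if "a < n" "b < n" for a b
    using corthogonalD[OF ws(2), of a b] that ws(3) by simp
  have "transpose_mat W * W = 1\<^sub>m n"
  proof (rule eq_matI)
    fix a c assume a: "a < dim_row (1\<^sub>m n)" and c: "c < dim_col (1\<^sub>m n)"
    hence a: "a < n" and c: "c < n" by auto
    have "(transpose_mat W * W) $$ (a,c) = ws' ! a \<bullet> ws' ! c"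
      using W a c colW by (simp add: row_transpose)
    also have "\<dots> = (1 / sqrt (ws!a \<bullet> ws!a)) * (1 / sqrt (ws!c \<bullet> ws!c)) * (ws ! a \<bullet> ws ! c)"
      unfolding ws'_def using a c ws(3) wsa[OF a] wsa[OF c] by simp
    also have "\<dots> = 1\<^sub>m n $$ (a,c)"
    proof (cases "a = c")
      case True
      have pos: "ws!a \<bullet> ws!a > 0" using ortho[OF a a] self_sprod_nonneg[of "ws!a"] by auto
      show ?thesis using True a pos
        by (simp add: field_simps real_sqrt_mult[symmetric])
    next
      case False thus ?thesis using ortho[OF a c] a c by simp
    qed
    finally show "(transpose_mat W * W) $$ (a,c) = 1\<^sub>m n $$ (a,c)" .
  qed (insert W, auto)
  moreover have "col W 0 = u" using colW[OF n] hdws uu unfolding ws'_def using n ws(3) by simp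
  ultimately show ?thesis using W by blast
qed

lemma transpose_sym_prod:
  fixes W M :: "real mat"
  assumes W: "W \<in> carrier_mat n k" and M: "M \<in> carrier_mat n n" and sym: "transpose_mat M = M"
  shows "transpose_mat (transpose_mat W * M * W) = transpose_mat W * M * W"
proof -
  have MW: "M * W \<in> carrier_mat n k" using M W by auto
  have "transpose_mat (transpose_mat W * M * W) = transpose_mat (transpose_mat W * (M * W))"
    using W M by simp
  also have "\<dots> = transpose_mat (M * W) * W"
    using transpose_mult[of "transpose_mat W" k n "M * W" k] W MW by simp
  also have "transpose_mat (M * W) = transpose_mat W * M"
    using transpose_mult[OF M W] sym by simp
  finally show ?thesis .
qed

lemma assoc4: "A \<in> carrier_mat n1 n2 \<Longrightarrow> B \<in> carrier_mat n2 n3 \<Longrightarrow> C \<in> carrier_mat n3 n4 \<Longrightarrow>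
  D \<in> carrier_mat n4 n5 \<Longrightarrow> (A * B) * (C * D) = A * ((B * C) * D)"
  by (subst assoc_mult_mat, auto)+

lemma assoc5: "A \<in> carrier_mat n1 n2 \<Longrightarrow> B \<in> carrier_mat n2 n3 \<Longrightarrow> C \<in> carrier_mat n3 n4 \<Longrightarrow>
  D \<in> carrier_mat n4 n5 \<Longrightarrow> E \<in> carrier_mat n5 n6 \<Longrightarrow> (A * B) * C * (D * E) = A * (B * C * D) * E"
  by (subst assoc_mult_mat, auto)+

lemma spectral:
  fixes M :: "real mat"
  assumes "M \<in> carrier_mat n n" and "transpose_mat M = M"
  shows "\<exists>U \<in> carrier_mat n n. transpose_mat U * U = 1\<^sub>m n \<and> diagonal_mat (transpose_mat U * M * U)"
  using assms
proof (induction n arbitrary: M)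
  case 0
  show ?case by (rule bexI[of _ "1\<^sub>m 0"], auto simp: diagonal_mat_def)
next
  case (Suc m M)
  note M = Suc.prems(1) and sym = Suc.prems(2)
  obtain e where "eigenvalue M e" using sym_real_eigenvalue[OF M _ sym] by auto
  then obtain v where "eigenvector M v e" unfolding eigenvalue_def by blast
  hence v: "v \<in> carrier_vec (Suc m)" "v \<noteq> 0\<^sub>v (Suc m)" "M *\<^sub>v v = e \<cdot>\<^sub>v v"
    unfolding eigenvector_def using M by auto
  have vpos: "v \<bullet> v > 0"
  proof -
    obtain a where a: "a < Suc m" "v $ a \<noteq> 0" using v(1,2) by (metis carrier_vecD eq_vecI index_zero_vec(1,2))
    have "v \<bullet> v = (\<Sum>b\<in>{0..<Suc m}. v $ b * v $ b)" using v(1) by (simp add: scalar_prod_def)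
    also have "\<dots> \<ge> v $ a * v $ a" by (rule member_le_sum, insert a, auto)
    finally show ?thesis using a(2) by (smt (verit) not_real_square_gt_zero)
  qed
  define u where "u = (1 / sqrt (v \<bullet> v)) \<cdot>\<^sub>v v"
  have u: "u \<in> carrier_vec (Suc m)" unfolding u_def using v by simp
  have uu: "u \<bullet> u = 1" unfolding u_def using v(1) vpos
    by (simp add: field_simps)
  have Mu: "M *\<^sub>v u = e \<cdot>\<^sub>v u" unfolding u_def using v M
    by (simp add: mult_mat_vec smult_smult_assoc mult.commute)
  obtain W where W: "W \<in> carrier_mat (Suc m) (Suc m)" "transpose_mat W * W = 1\<^sub>m (Suc m)"
     "col W 0 = u" using orth_completion[OF u uu] by blast
  define M' where "M' = transpose_mat W * M * W"
  have M': "M' \<in> carrier_mat (Suc m) (Suc m)" unfolding M'_def using W M by auto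
  have symM': "transpose_mat M' = M'" unfolding M'_def by (rule transpose_sym_prod[OF W(1) M sym])
  have colM': "col M' 0 = e \<cdot>\<^sub>v unit_vec (Suc m) 0"
  proof -
    have MW: "M * W \<in> carrier_mat (Suc m) (Suc m)" using M W by auto
    have "col M' 0 = col (transpose_mat W * (M * W)) 0" unfolding M'_def using W M by simp
    also have "\<dots> = transpose_mat W *\<^sub>v col (M * W) 0"
      by (rule col_mult2[of _ "Suc m" "Suc m"], insert W MW, auto)
    also have "col (M * W) 0 = M *\<^sub>v col W 0" by (rule col_mult2[OF M W(1)], simp)
    finally have "col M' 0 = transpose_mat W *\<^sub>v (M *\<^sub>v col W 0)" .
    also have "\<dots> = e \<cdot>\<^sub>v (transpose_mat W *\<^sub>v col W 0)" unfolding W(3) Mu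
      using W u by (simp add: mult_mat_vec)
    also have "transpose_mat W *\<^sub>v col W 0 = col (transpose_mat W * W) 0"
      by (rule col_mult2[of _ "Suc m" "Suc m", symmetric], insert W(1), auto)
    also have "\<dots> = unit_vec (Suc m) 0" unfolding W(2) by simp
    finally show ?thesis .
  qed
  have M'a0: "M' $$ (a, 0) = (if a = 0 then e else 0)" if "a < Suc m" for a
    using arg_cong[OF colM', of "\<lambda>x. x $ a"] that M' by (auto simp: unit_vec_def)
  have M'0a: "M' $$ (0, a) = (if a = 0 then e else 0)" if "a < Suc m" for a
    using M'a0[OF that] arg_cong[OF symM', of "\<lambda>x. x $$ (a,0)"] that M' by auto
  define A3 where "A3 = mat m m (\<lambda>(a,b). M' $$ (Suc a, Suc b))"
  have A3: "A3 \<in> carrier_mat m m" unfolding A3_def by simp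
  have symA3: "transpose_mat A3 = A3" unfolding A3_def
    using symM' M' by (intro eq_matI, auto, metis Suc_less_eq index_transpose_mat(1) carrier_matD)
  define A1 where "A1 = mat 1 1 (\<lambda>_. e)"
  have M'blk: "M' = four_block_mat A1 (0\<^sub>m 1 m) (0\<^sub>m m 1) A3"
  proof (rule eq_matI)
    fix a b assume "a < dim_row (four_block_mat A1 (0\<^sub>m 1 m) (0\<^sub>m m 1) A3)"
      "b < dim_col (four_block_mat A1 (0\<^sub>m 1 m) (0\<^sub>m m 1) A3)"
    hence a: "a < Suc m" and b: "b < Suc m" unfolding A1_def A3_def by auto
    show "M' $$ (a, b) = four_block_mat A1 (0\<^sub>m 1 m) (0\<^sub>m m 1) A3 $$ (a, b)"
    proof (cases a)
      case 0 thus ?thesis using M'0a[OF b] b unfolding A1_def A3_def by auto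
    next
      case (Suc a')
      show ?thesis
      proof (cases b)
        case 0 thus ?thesis using M'a0[OF a] a Suc unfolding A1_def A3_def by auto
      next
        case (Suc b') thus ?thesis using a b \<open>a = Suc a'\<close> unfolding A1_def A3_def by auto
      qed
    qed
  qed (insert M', auto simp: A1_def A3_def)
  from Suc.IH[OF A3 symA3] obtain U3 where U3: "U3 \<in> carrier_mat m m" "transpose_mat U3 * U3 = 1\<^sub>m m"
    "diagonal_mat (transpose_mat U3 * A3 * U3)" by blast
  define B where "B = four_block_mat (1\<^sub>m 1) (0\<^sub>m 1 m) (0\<^sub>m m 1) U3"
  have B: "B \<in> carrier_mat (Suc m) (Suc m)" unfolding B_def using U3 by (metis four_block_carrier_mat one_carrier_mat plus_1_eq_Suc)
  have BT: "transpose_mat B = four_block_mat (1\<^sub>m 1) (0\<^sub>m 1 m) (0\<^sub>m m 1) (transpose_mat U3)"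
    unfolding B_def using U3 by (subst transpose_four_block_mat, auto)
  define U where "U = W * B"
  have U: "U \<in> carrier_mat (Suc m) (Suc m)" unfolding U_def using W B by auto
  have TU: "transpose_mat U = transpose_mat B * transpose_mat W" 
    unfolding U_def by (rule transpose_mult[OF W(1) B])
  have "transpose_mat U * U = transpose_mat B * ((transpose_mat W * W) * B)"
    unfolding TU unfolding U_def by (rule assoc4, insert W B, auto)
  also have "\<dots> = transpose_mat B * B" using B W by simp
  also have "\<dots> = 1\<^sub>m (Suc m)" unfolding BT unfolding B_def using U3
    by (subst mult_four_block_mat[of _ 1 1 _ m _ m _ _ 1 _ m], auto intro!: eq_matI)
  finally have UU: "transpose_mat U * U = 1\<^sub>m (Suc m)" .
  have "transpose_mat U * M * U = transpose_mat B * M' * B"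
    unfolding TU unfolding U_def M'_def by (rule assoc5, insert W B M, auto)
  also have "\<dots> = four_block_mat A1 (0\<^sub>m 1 m) (0\<^sub>m m 1) (transpose_mat U3 * A3 * U3)"
    unfolding BT M'blk unfolding B_def using U3 A3
    by (subst mult_four_block_mat[of _ 1 1 _ m _ m _ _ 1 _ m], auto simp: A1_def,
        subst mult_four_block_mat[of _ 1 1 _ m _ m _ _ 1 _ m], auto)
  finally have "diagonal_mat (transpose_mat U * M * U)"
    using U3(3) U3(1) A3 unfolding diagonal_mat_def A1_def by auto
  thus ?case using U UU by blast
qed

lemma prod_lin_mset: "(\<Prod>a\<leftarrow>as. [:- a, 1:]) = prod_mset (image_mset (\<lambda>a. [:- a, 1:]) (mset as))"
  by (induct as) auto

lemma lin_prod_mset_eq: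
  fixes xs ys :: "real list"
  shows "(\<Prod>a\<leftarrow>xs. [:- a, 1:]) = (\<Prod>a\<leftarrow>ys. [:- a, 1:]) \<Longrightarrow> mset xs = mset ys"
proof (induction xs arbitrary: ys)
  case Nil
  show ?case
  proof (cases ys)
    case (Cons y ys')
    have "poly (\<Prod>a\<leftarrow>ys. [:- a, 1:]) y = 0" unfolding Cons by simp
    with Nil.prems show ?thesis by simp
  qed simp
next
  case (Cons x xs)
  have "poly (\<Prod>a\<leftarrow>ys. [:- a, 1:]) x = 0" unfolding Cons.prems[symmetric] by simp
  hence "x \<in> set ys" by (auto simp: poly_prod_list prod_list_zero_iff)
  hence ys: "mset ys = add_mset x (mset (remove1 x ys))" by simp
  have eq: "[:- x, 1:] * (\<Prod>a\<leftarrow>xs. [:- a, 1:]) = [:- x, 1:] * (\<Prod>a\<leftarrow>remove1 x ys. [:- a, 1:])"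
    using Cons.prems unfolding prod_lin_mset ys by simp
  have nz: "[:- x, 1:] \<noteq> (0 :: real poly)" by simp
  have "(\<Prod>a\<leftarrow>xs. [:- a, 1:]) = (\<Prod>a\<leftarrow>remove1 x ys. [:- a, 1:])"
    by (rule iffD1[OF mult_left_cancel[OF nz] eq])
  from Cons.IH[OF this] have ih: "mset xs = mset (remove1 x ys)" .
  show ?case by (simp only: mset.simps ih ys)
qed

lemma gram_entry:
  fixes X :: "real mat" assumes X: "X \<in> carrier_mat d n" and k: "k < n" and l: "l < n"
  shows "(transpose_mat X * X) $$ (k,l) = col X k \<bullet> col X l"
  using X k l by (simp add: row_transpose)

lemma nuclear_eigen:
  fixes A :: "real mat" assumes A: "A \<in> carrier_mat d n"
  shows "\<exists>U \<in> carrier_mat n n. transpose_mat U * U = 1\<^sub>m n \<and> U * transpose_mat U = 1\<^sub>m n \<and>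
     (\<forall>k<n. \<forall>l<n. k \<noteq> l \<longrightarrow> (A *\<^sub>v col U k) \<bullet> (A *\<^sub>v col U l) = 0) \<and>
     nuclear_norm A = (\<Sum>k<n. sqrt ((A *\<^sub>v col U k) \<bullet> (A *\<^sub>v col U k)))"
proof -
  define M where "M = transpose_mat A * A"
  have M: "M \<in> carrier_mat n n" unfolding M_def using A by auto
  have sym: "transpose_mat M = M" unfolding M_def using transpose_mult[of "transpose_mat A" n d A n] A by simp
  obtain U where U: "U \<in> carrier_mat n n" "transpose_mat U * U = 1\<^sub>m n"
    and diag: "diagonal_mat (transpose_mat U * M * U)" using spectral[OF M sym] by blast
  have UU: "U * transpose_mat U = 1\<^sub>m n"
    using mat_mult_left_right_inverse[of "transpose_mat U" n U] U by auto
  define D where "D = transpose_mat U * M * U"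
  have D: "D \<in> carrier_mat n n" unfolding D_def using U M by auto
  have DAU: "D = transpose_mat (A * U) * (A * U)"
  proof -
    have 1: "transpose_mat U * transpose_mat A * (A * U) = transpose_mat U * ((transpose_mat A * A) * U)"
      by (rule assoc4, insert A U, auto)
    have 2: "transpose_mat U * (transpose_mat A * A) * U = transpose_mat U * ((transpose_mat A * A) * U)"
      by (rule assoc_mult_mat, insert A U, auto)
    show ?thesis unfolding D_def M_def transpose_mult[OF A U(1)] 1 2 ..
  qed
  have AU: "A * U \<in> carrier_mat d n" using A U by auto
  have Dent: "D $$ (k,l) = (A *\<^sub>v col U k) \<bullet> (A *\<^sub>v col U l)" if "k < n" "l < n" for k l
    unfolding DAU gram_entry[OF AU that] col_mult2[OF A U(1) that(1)] col_mult2[OF A U(1) that(2)] ..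
  have "M = U * D * transpose_mat U"
  proof -
    have "U * D * transpose_mat U = (U * transpose_mat U) * M * (U * transpose_mat U)"
      unfolding D_def by (rule assoc5[symmetric], insert U M, auto)
    thus ?thesis using UU M by simp
  qed
  hence "similar_mat M D" unfolding similar_mat_def
    by (intro exI[of _ U] exI[of _ "transpose_mat U"] similar_mat_witI[of _ _ n], insert UU U M D, auto)
  hence cpM: "char_poly M = (\<Prod>a\<leftarrow>diag_mat D. [:- a, 1:])"
  proof -
    have ut: "upper_triangular D" using diag D unfolding D_def[symmetric] diagonal_mat_def upper_triangular_def
      by auto
    from char_poly_similar[OF \<open>similar_mat M D\<close>] char_poly_upper_triangular[OF D ut]
    show ?thesis by simp
  qed
  define es where "es = (SOME es. char_poly (transpose_mat A * A) = (\<Prod>e\<leftarrow>es. [:- e, 1:]))"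
  have "char_poly (transpose_mat A * A) = (\<Prod>e\<leftarrow>es. [:- e, 1:])"
    unfolding es_def by (rule someI[of _ "diag_mat D"], insert cpM, simp add: M_def)
  hence "mset es = mset (diag_mat D)" using cpM unfolding M_def by (intro lin_prod_mset_eq) simp
  hence "nuclear_norm A = sum_list (map sqrt (diag_mat D))"
    unfolding nuclear_norm_def sq_singular_values_def es_def[symmetric]
    by (metis mset_map sum_mset_sum_list)
  also have "\<dots> = (\<Sum>k<n. sqrt (D $$ (k,k)))"
    using D unfolding diag_mat_def by (simp add: sum_set_upt_conv_sum_list_nat[symmetric] lessThan_atLeast0)
  also have "\<dots> = (\<Sum>k<n. sqrt ((A *\<^sub>v col U k) \<bullet> (A *\<^sub>v col U k)))"
    using Dent by simp
  finally have nn: "nuclear_norm A = (\<Sum>k<n. sqrt ((A *\<^sub>v col U k) \<bullet> (A *\<^sub>v col U k)))" .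
  have "\<forall>k<n. \<forall>l<n. k \<noteq> l \<longrightarrow> (A *\<^sub>v col U k) \<bullet> (A *\<^sub>v col U l) = 0"
    using diag D Dent unfolding diagonal_mat_def D_def[symmetric] by auto
  with nn U UU show ?thesis by blast
qed

lemma cs_sum_sq:
  fixes f g :: "'i \<Rightarrow> real"
  shows "(\<Sum>i\<in>I. f i * g i)^2 \<le> (\<Sum>i\<in>I. (f i)^2) * (\<Sum>i\<in>I. (g i)^2)"
proof (cases "finite I")
  case True
  have "0 \<le> (\<Sum>i\<in>I. \<Sum>j\<in>I. (f i * g j - f j * g i)^2)" by (intro sum_nonneg) auto
  also have "\<dots> = 2 * ((\<Sum>i\<in>I. (f i)^2) * (\<Sum>i\<in>I. (g i)^2)) - 2 * (\<Sum>i\<in>I. f i * g i)^2"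
  proof -
    have e: "\<And>i j. (f i * g j - f j * g i)^2 = (f i)^2 * (g j)^2 + (g i)^2 * (f j)^2 - 2 * ((f i * g i) * (f j * g j))"
      by (simp add: power2_eq_square algebra_simps)
    have "(\<Sum>i\<in>I. \<Sum>j\<in>I. (f i * g j - f j * g i)^2) = 
      (\<Sum>i\<in>I. \<Sum>j\<in>I. (f i)^2 * (g j)^2) + (\<Sum>i\<in>I. \<Sum>j\<in>I. (g i)^2 * (f j)^2)
      - 2 * (\<Sum>i\<in>I. \<Sum>j\<in>I. (f i * g i) * (f j * g j))"
      unfolding e by (simp add: sum.distrib sum_subtractf sum_distrib_left)
    also have "\<dots> = 2 * ((\<Sum>i\<in>I. (f i)^2) * (\<Sum>i\<in>I. (g i)^2)) - 2 * (\<Sum>i\<in>I. f i * g i)^2"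
      unfolding sum_product[symmetric] power2_eq_square[of "sum _ _"] by simp
    finally show ?thesis .
  qed
  finally show ?thesis by simp
qed simp

lemma cs_sum:
  fixes f g :: "'i \<Rightarrow> real"
  shows "(\<Sum>i\<in>I. f i * g i) \<le> sqrt (\<Sum>i\<in>I. (f i)^2) * sqrt (\<Sum>i\<in>I. (g i)^2)"
proof -
  have "(\<Sum>i\<in>I. f i * g i) \<le> \<bar>\<Sum>i\<in>I. f i * g i\<bar>" by simp
  also have "\<dots> = sqrt ((\<Sum>i\<in>I. f i * g i)^2)" by simp
  also have "\<dots> \<le> sqrt ((\<Sum>i\<in>I. (f i)^2) * (\<Sum>i\<in>I. (g i)^2))"
    by (rule real_sqrt_le_mono[OF cs_sum_sq])
  also have "\<dots> = sqrt (\<Sum>i\<in>I. (f i)^2) * sqrt (\<Sum>i\<in>I. (g i)^2)" by (simp add: real_sqrt_mult)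
  finally show ?thesis .
qed

lemma sprod_sq: "(v :: real vec) \<bullet> v = (\<Sum>i\<in>{0..<dim_vec v}. (v $ i)^2)"
  by (simp add: scalar_prod_def power2_eq_square)

lemma cs_vec:
  fixes x w :: "real vec" assumes "x \<in> carrier_vec d" "w \<in> carrier_vec d"
  shows "x \<bullet> w \<le> sqrt (x \<bullet> x) * sqrt (w \<bullet> w)"
  using cs_sum[of "\<lambda>i. x $ i" "\<lambda>i. w $ i" "{0..<d}"] assms
  by (simp add: scalar_prod_def power2_eq_square)

lemma parseval:
  fixes V :: "real mat" assumes V: "V \<in> carrier_mat n n" and VV: "V * transpose_mat V = 1\<^sub>m n"
    and z: "z \<in> carrier_vec n"
  shows "(\<Sum>m<n. (col V m \<bullet> z)^2) = z \<bullet> z"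
proof -
  define y where "y = transpose_mat V *\<^sub>v z"
  have y: "y \<in> carrier_vec n" unfolding y_def using V z by (intro mult_mat_vec_carrier[of _ n n]) auto
  have ym: "y $ m = col V m \<bullet> z" if "m < n" for m
    unfolding y_def using that V by (simp add: row_transpose)
  have "y \<bullet> y = (transpose_mat V *\<^sub>v z) \<bullet> y" unfolding y_def ..
  also have "\<dots> = z \<bullet> (V *\<^sub>v y)" by (rule transpose_vec_mult_scalar[OF V y z])
  also have "V *\<^sub>v y = (V * transpose_mat V) *\<^sub>v z" unfolding y_def using V z by simp
  also have "\<dots> = z" unfolding VV using z by simp
  finally have "y \<bullet> y = z \<bullet> z" .
  moreover have "y \<bullet> y = (\<Sum>m<n. (col V m \<bullet> z)^2)" unfolding sprod_sq using y ym
    by (simp add: lessThan_atLeast0)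
  ultimately show ?thesis by simp
qed

lemma expansion:
  fixes A U :: "real mat" 
  assumes A: "A \<in> carrier_mat d n" and U: "U \<in> carrier_mat n n" and UU: "U * transpose_mat U = 1\<^sub>m n"
    and q: "q \<in> carrier_vec n" and w: "w \<in> carrier_vec d"
  shows "(A *\<^sub>v q) \<bullet> w = (\<Sum>k<n. (col U k \<bullet> q) * ((A *\<^sub>v col U k) \<bullet> w))"
proof -
  define c where "c = transpose_mat U *\<^sub>v q"
  have c: "c \<in> carrier_vec n" unfolding c_def using U q by (intro mult_mat_vec_carrier[of _ n n]) auto
  have ck: "c $ k = col U k \<bullet> q" if "k < n" for k unfolding c_def using that U by (simp add: row_transpose)
  have AU: "A * U \<in> carrier_mat d n" using A U by auto
  have "A *\<^sub>v q = A *\<^sub>v ((U * transpose_mat U) *\<^sub>v q)" unfolding UU using q by simp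
  also have "\<dots> = (A * U) *\<^sub>v c" unfolding c_def using A U q by simp
  finally have Aq: "A *\<^sub>v q = (A * U) *\<^sub>v c" .
  have "(A *\<^sub>v q) \<bullet> w = w \<bullet> ((A * U) *\<^sub>v c)" unfolding Aq
    by (rule comm_scalar_prod[of _ d], insert AU c w, auto)
  also have "\<dots> = (transpose_mat (A * U) *\<^sub>v w) \<bullet> c" 
    by (rule transpose_vec_mult_scalar[OF AU c w, symmetric])
  also have "\<dots> = (\<Sum>k<n. (col U k \<bullet> q) * ((A *\<^sub>v col U k) \<bullet> w))"
  proof -
    have tk: "(transpose_mat (A * U) *\<^sub>v w) $ k = (A *\<^sub>v col U k) \<bullet> w" if k: "k < n" for k
    proof -
      have "(transpose_mat (A * U) *\<^sub>v w) $ k = row (transpose_mat (A * U)) k \<bullet> w"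
        by (rule index_mult_mat_vec, insert AU U k, simp)
      also have "row (transpose_mat (A * U)) k = col (A * U) k" by (rule row_transpose, insert AU U k, simp)
      also have "col (A * U) k = A *\<^sub>v col U k" by (rule col_mult2[OF A U k])
      finally show ?thesis .
    qed
    show ?thesis
      unfolding scalar_prod_def[of "transpose_mat (A * U) *\<^sub>v w" c] using c
      by (auto simp: lessThan_atLeast0 tk ck mult.commute intro!: sum.cong)
  qed
  finally show ?thesis .
qed

lemma sprod_idx: "v \<in> carrier_vec d \<Longrightarrow> w \<in> carrier_vec d \<Longrightarrow> v \<bullet> w = (\<Sum>r<d. v $ r * w $ r)"
  by (simp add: scalar_prod_def lessThan_atLeast0)

lemma bessel:
  fixes w :: "'i \<Rightarrow> real vec" and z :: "real vec"
  assumes I: "finite I" and wc: "\<And>m. m \<in> I \<Longrightarrow> w m \<in> carrier_vec d"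
    and orth: "\<And>m l. m \<in> I \<Longrightarrow> l \<in> I \<Longrightarrow> m \<noteq> l \<Longrightarrow> w m \<bullet> w l = 0"
    and norm1: "\<And>m. m \<in> I \<Longrightarrow> w m \<bullet> w m = 1 \<or> w m = 0\<^sub>v d"
    and z: "z \<in> carrier_vec d"
  shows "(\<Sum>m\<in>I. (z \<bullet> w m)^2) \<le> z \<bullet> z"
proof -
  define c where "c m = z \<bullet> w m" for m
  define y where "y r = (\<Sum>m\<in>I. c m * w m $ r)" for r
  have zy: "(\<Sum>r<d. z $ r * y r) = (\<Sum>m\<in>I. (c m)^2)"
  proof -
    have "(\<Sum>r<d. z $ r * y r) = (\<Sum>r<d. \<Sum>m\<in>I. c m * (z $ r * w m $ r))"
      unfolding y_def by (simp add: sum_distrib_left mult.left_commute)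
    also have "\<dots> = (\<Sum>m\<in>I. \<Sum>r<d. c m * (z $ r * w m $ r))" by (rule sum.swap)
    also have "\<dots> = (\<Sum>m\<in>I. c m * (\<Sum>r<d. z $ r * w m $ r))" by (simp add: sum_distrib_left)
    also have "\<dots> = (\<Sum>m\<in>I. (c m)^2)"
      by (intro sum.cong refl, simp add: c_def sprod_idx[OF z wc] power2_eq_square)
    finally show ?thesis .
  qed
  have cm: "c m * c m * (w m \<bullet> w m) = (c m)^2" if "m \<in> I" for m
    using norm1[OF that] z by (auto simp: c_def power2_eq_square)
  have yy: "(\<Sum>r<d. y r * y r) = (\<Sum>m\<in>I. (c m)^2)"
  proof -
    have "(\<Sum>r<d. y r * y r) = (\<Sum>r<d. \<Sum>m\<in>I. \<Sum>l\<in>I. c m * c l * (w m $ r * w l $ r))"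
      unfolding y_def by (simp add: sum_product mult_ac)
    also have "\<dots> = (\<Sum>m\<in>I. \<Sum>r<d. \<Sum>l\<in>I. c m * c l * (w m $ r * w l $ r))" by (rule sum.swap)
    also have "\<dots> = (\<Sum>m\<in>I. \<Sum>l\<in>I. \<Sum>r<d. c m * c l * (w m $ r * w l $ r))" 
      by (rule sum.cong[OF refl], rule sum.swap)
    also have "\<dots> = (\<Sum>m\<in>I. \<Sum>l\<in>I. c m * c l * (\<Sum>r<d. w m $ r * w l $ r))" 
      by (simp add: sum_distrib_left)
    also have "\<dots> = (\<Sum>m\<in>I. \<Sum>l\<in>I. c m * c l * (w m \<bullet> w l))"
      by (intro sum.cong refl, simp add: sprod_idx[OF wc wc])
    also have "\<dots> = (\<Sum>m\<in>I. c m * c m * (w m \<bullet> w m))"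
    proof (intro sum.cong refl)
      fix m assume m: "m \<in> I"
      have "(\<Sum>l\<in>I. c m * c l * (w m \<bullet> w l)) = c m * c m * (w m \<bullet> w m) + (\<Sum>l\<in>I-{m}. c m * c l * (w m \<bullet> w l))"
        using I m by (simp add: sum.remove)
      also have "(\<Sum>l\<in>I-{m}. c m * c l * (w m \<bullet> w l)) = 0"
        by (rule sum.neutral, insert orth m, auto)
      finally show "(\<Sum>l\<in>I. c m * c l * (w m \<bullet> w l)) = c m * c m * (w m \<bullet> w m)" by simp
    qed
    also have "\<dots> = (\<Sum>m\<in>I. (c m)^2)" by (intro sum.cong refl cm)
    finally show ?thesis .
  qed
  have "0 \<le> (\<Sum>r<d. (z $ r - y r)^2)" by (intro sum_nonneg) auto
  also have "\<dots> = (\<Sum>r<d. z $ r * z $ r) - 2 * (\<Sum>r<d. z $ r * y r) + (\<Sum>r<d. y r * y r)"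
    by (simp add: power2_eq_square algebra_simps sum.distrib sum_subtractf sum_distrib_left)
  also have "\<dots> = z \<bullet> z - (\<Sum>m\<in>I. (c m)^2)" unfolding zy yy sprod_idx[OF z z] by simp
  finally show ?thesis unfolding c_def by simp
qed

lemma dual_bound:
  fixes A U :: "real mat" and q w :: "'i \<Rightarrow> real vec"
  assumes A: "A \<in> carrier_mat d n" and U: "U \<in> carrier_mat n n" and UU: "U * transpose_mat U = 1\<^sub>m n"
    and I: "finite I" and qc: "\<And>m. m \<in> I \<Longrightarrow> q m \<in> carrier_vec n"
    and wc: "\<And>m. m \<in> I \<Longrightarrow> w m \<in> carrier_vec d"
    and bess: "\<And>z. z \<in> carrier_vec d \<Longrightarrow> (\<Sum>m\<in>I. (z \<bullet> w m)^2) \<le> z \<bullet> z"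
  shows "(\<Sum>m\<in>I. (A *\<^sub>v q m) \<bullet> w m) \<le>
    (\<Sum>k<n. sqrt (\<Sum>m\<in>I. (col U k \<bullet> q m)^2) * sqrt ((A *\<^sub>v col U k) \<bullet> (A *\<^sub>v col U k)))"
proof -
  have "(\<Sum>m\<in>I. (A *\<^sub>v q m) \<bullet> w m) = (\<Sum>m\<in>I. \<Sum>k<n. (col U k \<bullet> q m) * ((A *\<^sub>v col U k) \<bullet> w m))"
    by (intro sum.cong refl expansion[OF A U UU qc wc])
  also have "\<dots> = (\<Sum>k<n. \<Sum>m\<in>I. (col U k \<bullet> q m) * ((A *\<^sub>v col U k) \<bullet> w m))" by (rule sum.swap)
  also have "\<dots> \<le> (\<Sum>k<n. sqrt (\<Sum>m\<in>I. (col U k \<bullet> q m)^2) * sqrt (\<Sum>m\<in>I. ((A *\<^sub>v col U k) \<bullet> w m)^2))"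
    by (intro sum_mono cs_sum)
  also have "\<dots> \<le> (\<Sum>k<n. sqrt (\<Sum>m\<in>I. (col U k \<bullet> q m)^2) * sqrt ((A *\<^sub>v col U k) \<bullet> (A *\<^sub>v col U k)))"
  proof (intro sum_mono mult_left_mono real_sqrt_le_mono)
    fix k assume "k \<in> {..<n}"
    hence "A *\<^sub>v col U k \<in> carrier_vec d" using A U by auto
    thus "(\<Sum>m\<in>I. ((A *\<^sub>v col U k) \<bullet> w m)^2) \<le> (A *\<^sub>v col U k) \<bullet> (A *\<^sub>v col U k)" by (rule bess)
  qed (auto intro: sum_nonneg)
  finally show ?thesis .
qed

lemma nuclear_repr:
  fixes B :: "real mat" assumes B: "B \<in> carrier_mat d n"
  shows "\<exists>V \<in> carrier_mat n n. transpose_mat V * V = 1\<^sub>m n \<and> V * transpose_mat V = 1\<^sub>m n \<and>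
     (\<exists>w. (\<forall>m<n. w m \<in> carrier_vec d \<and> w m \<bullet> w m \<le> 1) \<and>
          (\<forall>z \<in> carrier_vec d. (\<Sum>m<n. (z \<bullet> w m)^2) \<le> z \<bullet> z) \<and>
          nuclear_norm B = (\<Sum>m<n. (B *\<^sub>v col V m) \<bullet> w m))"
proof -
  obtain V where V: "V \<in> carrier_mat n n" "transpose_mat V * V = 1\<^sub>m n" "V * transpose_mat V = 1\<^sub>m n"
    and orth: "\<And>k l. k < n \<Longrightarrow> l < n \<Longrightarrow> k \<noteq> l \<Longrightarrow> (B *\<^sub>v col V k) \<bullet> (B *\<^sub>v col V l) = 0"
    and nn: "nuclear_norm B = (\<Sum>k<n. sqrt ((B *\<^sub>v col V k) \<bullet> (B *\<^sub>v col V k)))"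
    using nuclear_eigen[OF B] by blast
  define b where "b m = B *\<^sub>v col V m" for m
  define s where "s m = sqrt (b m \<bullet> b m)" for m
  define w where "w m = (if s m = 0 then 0\<^sub>v d else (1 / s m) \<cdot>\<^sub>v b m)" for m
  have bc: "b m \<in> carrier_vec d" if "m < n" for m unfolding b_def using B V that by auto
  have wc: "w m \<in> carrier_vec d" if "m < n" for m unfolding w_def using bc[OF that] by auto
  have bb: "b m \<bullet> b m = (s m)^2" for m unfolding s_def using self_sprod_nonneg by simp
  have bw: "b m \<bullet> w m = s m" if "m < n" for m
  proof (cases "s m = 0")
    case True thus ?thesis unfolding w_def using bc[OF that] by simp
  next
    case False thus ?thesis unfolding w_def using bc[OF that] bb[of m] by (simp add: power2_eq_square)
  qed
  have ww: "w m \<bullet> w m = 1 \<or> w m = 0\<^sub>v d" if "m < n" for m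
  proof (cases "s m = 0")
    case False thus ?thesis unfolding w_def using bc[OF that] bb[of m] 
      by (simp add: power2_eq_square field_simps)
  qed (simp add: w_def)
  have wwo: "w m \<bullet> w l = 0" if "m < n" "l < n" "m \<noteq> l" for m l
    using orth[OF that] bc[OF that(1)] bc[OF that(2)] unfolding w_def b_def[symmetric] by auto
  have bess: "\<forall>z \<in> carrier_vec d. (\<Sum>m<n. (z \<bullet> w m)^2) \<le> z \<bullet> z"
    using bessel[of "{..<n}" w d] wc ww wwo by auto
  have wle: "w m \<bullet> w m \<le> 1" if "m < n" for m using ww[OF that] by auto
  have "nuclear_norm B = (\<Sum>m<n. (B *\<^sub>v col V m) \<bullet> w m)"
    unfolding nn using bw unfolding b_def s_def by simp
  thus ?thesis using V wc wle bess by blast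
qed

lemma col_unit_norm:
  fixes U :: "real mat" assumes U: "U \<in> carrier_mat n n" and UU: "transpose_mat U * U = 1\<^sub>m n" and k: "k < n"
  shows "col U k \<bullet> col U k = 1"
  using gram_entry[OF U k k] UU k by simp

lemma nuclear_nonneg: fixes A :: "real mat" assumes A: "A \<in> carrier_mat d n" shows "nuclear_norm A \<ge> 0"
proof -
  obtain U where "nuclear_norm A = (\<Sum>k<n. sqrt ((A *\<^sub>v col U k) \<bullet> (A *\<^sub>v col U k)))"
    using nuclear_eigen[OF A] by blast
  thus ?thesis by (auto intro!: sum_nonneg simp: self_sprod_nonneg)
qed

lemma dual_le_N:
  fixes A V :: "real mat" and w :: "nat \<Rightarrow> real vec"
  assumes A: "A \<in> carrier_mat d n" and V: "V \<in> carrier_mat n n" and VV: "V * transpose_mat V = 1\<^sub>m n"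
    and wc: "\<And>m. m < n \<Longrightarrow> w m \<in> carrier_vec d"
    and bess: "\<And>z. z \<in> carrier_vec d \<Longrightarrow> (\<Sum>m<n. (z \<bullet> w m)^2) \<le> z \<bullet> z"
  shows "(\<Sum>m<n. (A *\<^sub>v col V m) \<bullet> w m) \<le> nuclear_norm A"
proof -
  obtain U where U: "U \<in> carrier_mat n n" "transpose_mat U * U = 1\<^sub>m n" "U * transpose_mat U = 1\<^sub>m n"
    and nn: "nuclear_norm A = (\<Sum>k<n. sqrt ((A *\<^sub>v col U k) \<bullet> (A *\<^sub>v col U k)))"
    using nuclear_eigen[OF A] by blast
  have "(\<Sum>m<n. (A *\<^sub>v col V m) \<bullet> w m) \<le>
    (\<Sum>k<n. sqrt (\<Sum>m<n. (col U k \<bullet> col V m)^2) * sqrt ((A *\<^sub>v col U k) \<bullet> (A *\<^sub>v col U k)))"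
    by (rule dual_bound[OF A U(1) U(3)], insert V wc bess, auto)
  also have "\<dots> = nuclear_norm A" unfolding nn
  proof (intro sum.cong refl)
    fix k assume k: "k \<in> {..<n}"
    have "(\<Sum>m<n. (col U k \<bullet> col V m)^2) = (\<Sum>m<n. (col V m \<bullet> col U k)^2)"
      by (intro sum.cong refl, subst comm_scalar_prod[of _ n], insert U V k, auto)
    also have "\<dots> = col U k \<bullet> col U k" by (rule parseval[OF V VV], insert U k, auto)
    also have "\<dots> = 1" using col_unit_norm[OF U(1,2)] k by auto
    finally show "sqrt (\<Sum>m<n. (col U k \<bullet> col V m)^2) * sqrt ((A *\<^sub>v col U k) \<bullet> (A *\<^sub>v col U k))
      = sqrt ((A *\<^sub>v col U k) \<bullet> (A *\<^sub>v col U k))" by simp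
  qed
  finally show ?thesis .
qed

lemma col_le_N:
  fixes A :: "real mat" assumes A: "A \<in> carrier_mat d n" and l: "l < n"
  shows "sqrt ((A *\<^sub>v unit_vec n l) \<bullet> (A *\<^sub>v unit_vec n l)) \<le> nuclear_norm A"
proof -
  define b where "b = A *\<^sub>v unit_vec n l"
  define s where "s = sqrt (b \<bullet> b)"
  define w where "w m = (if m = l \<and> s \<noteq> 0 then (1 / s) \<cdot>\<^sub>v b else 0\<^sub>v d)" for m
  have b: "b \<in> carrier_vec d" unfolding b_def using A by auto
  have wc: "w m \<in> carrier_vec d" for m unfolding w_def using b by auto
  have bb: "b \<bullet> b = s^2" unfolding s_def using self_sprod_nonneg by simp
  have ww: "w m \<bullet> w m = 1 \<or> w m = 0\<^sub>v d" for m
    unfolding w_def using b bb by (auto simp: power2_eq_square field_simps)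
  have bess: "(\<Sum>m<n. (z \<bullet> w m)^2) \<le> z \<bullet> z" if "z \<in> carrier_vec d" for z
    by (rule bessel[of "{..<n}" w d], insert wc ww that b, auto simp: w_def)
  have "(\<Sum>m<n. (A *\<^sub>v col (1\<^sub>m n) m) \<bullet> w m) \<le> nuclear_norm A"
    by (rule dual_le_N[OF A _ _ wc bess], auto)
  also have "(\<Sum>m<n. (A *\<^sub>v col (1\<^sub>m n) m) \<bullet> w m) = (\<Sum>m<n. if m = l then b \<bullet> w l else 0)"
  proof (intro sum.cong refl)
    fix m assume m: "m \<in> {..<n}"
    have "A *\<^sub>v unit_vec n m \<in> carrier_vec d" using A by auto
    thus "(A *\<^sub>v col (1\<^sub>m n) m) \<bullet> w m = (if m = l then b \<bullet> w l else 0)"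
      using m unfolding b_def by (auto simp: w_def)
  qed
  also have "\<dots> = b \<bullet> w l" using l by simp
  also have "\<dots> = s" using l b bb unfolding w_def
    by (cases "s = 0", auto simp: power2_eq_square)
  finally show ?thesis unfolding s_def b_def .
qed

lemma perturb:
  fixes A B :: "real mat" assumes A: "A \<in> carrier_mat d n" and B: "B \<in> carrier_mat d n"
    and E: "\<And>v. v \<in> carrier_vec n \<Longrightarrow> v \<bullet> v \<le> 1 \<Longrightarrow>
       sqrt ((B *\<^sub>v v - A *\<^sub>v v) \<bullet> (B *\<^sub>v v - A *\<^sub>v v)) \<le> E"
  shows "nuclear_norm B \<le> nuclear_norm A + n * E"
proof -
  obtain V w where V: "V \<in> carrier_mat n n" "transpose_mat V * V = 1\<^sub>m n" "V * transpose_mat V = 1\<^sub>m n"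
    and wc: "\<And>m. m < n \<Longrightarrow> w m \<in> carrier_vec d \<and> w m \<bullet> w m \<le> 1"
    and bess: "\<And>z. z \<in> carrier_vec d \<Longrightarrow> (\<Sum>m<n. (z \<bullet> w m)^2) \<le> z \<bullet> z"
    and nn: "nuclear_norm B = (\<Sum>m<n. (B *\<^sub>v col V m) \<bullet> w m)"
    using nuclear_repr[OF B] by blast
  have split: "(B *\<^sub>v col V m) \<bullet> w m = (A *\<^sub>v col V m) \<bullet> w m + (B *\<^sub>v col V m - A *\<^sub>v col V m) \<bullet> w m"
    if "m < n" for m
    using wc[OF that] A B V that by (subst minus_scalar_prod_distrib[of _ d], auto)
  have err: "(B *\<^sub>v col V m - A *\<^sub>v col V m) \<bullet> w m \<le> E" if m: "m < n" for m
  proof -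
    have c: "B *\<^sub>v col V m - A *\<^sub>v col V m \<in> carrier_vec d" using A B V m by auto
    have "(B *\<^sub>v col V m - A *\<^sub>v col V m) \<bullet> w m \<le> 
      sqrt ((B *\<^sub>v col V m - A *\<^sub>v col V m) \<bullet> (B *\<^sub>v col V m - A *\<^sub>v col V m)) * sqrt (w m \<bullet> w m)"
      by (rule cs_vec[OF c], insert wc[OF m], auto)
    also have "\<dots> \<le> E * 1"
    proof (rule mult_mono)
      show "sqrt ((B *\<^sub>v col V m - A *\<^sub>v col V m) \<bullet> (B *\<^sub>v col V m - A *\<^sub>v col V m)) \<le> E"
        by (rule E, insert V m col_unit_norm[OF V(1,2) m], auto)
      show "sqrt (w m \<bullet> w m) \<le> 1" using wc[OF m] by auto
      show "0 \<le> E" by (rule order_trans[OF real_sqrt_ge_zero[OF self_sprod_nonneg] E[of "0\<^sub>v n"]], auto)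
    qed (auto simp: self_sprod_nonneg)
    finally show ?thesis by simp
  qed
  have "nuclear_norm B = (\<Sum>m<n. (A *\<^sub>v col V m) \<bullet> w m) + (\<Sum>m<n. (B *\<^sub>v col V m - A *\<^sub>v col V m) \<bullet> w m)"
    unfolding nn by (simp add: split sum.distrib)
  also have "\<dots> \<le> nuclear_norm A + (\<Sum>m<n. E)"
    by (intro add_mono dual_le_N[OF A V(1,3)] sum_mono err, insert wc bess, auto)
  finally show ?thesis by simp
qed

definition avg :: "nat \<Rightarrow> nat \<Rightarrow> real vec \<Rightarrow> real vec" where
  "avg i j v = v - ((v $ i - v $ j) / 2) \<cdot>\<^sub>v (unit_vec (dim_vec v) i - unit_vec (dim_vec v) j)"

context
  fixes i j n :: nat
  assumes ij: "i < n" "j < n" "i \<noteq> j"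
begin

lemma avg_carrier[simp]: "v \<in> carrier_vec n \<Longrightarrow> avg i j v \<in> carrier_vec n"
  unfolding avg_def by auto

lemma avg_idx: "v \<in> carrier_vec n \<Longrightarrow> l < n \<Longrightarrow>
  avg i j v $ l = (if l = i \<or> l = j then (v $ i + v $ j) / 2 else v $ l)"
  unfolding avg_def using ij by (auto simp: field_simps)

lemma avg_sprod: "u \<in> carrier_vec n \<Longrightarrow> v \<in> carrier_vec n \<Longrightarrow>
   u \<bullet> avg i j v = u \<bullet> v - (u $ i - u $ j) * (v $ i - v $ j) / 2"
  unfolding avg_def using ij
  by (subst scalar_prod_minus_distrib[of _ n], auto simp: scalar_prod_minus_distrib[of _ n])

lemma avg_sym: "u \<in> carrier_vec n \<Longrightarrow> v \<in> carrier_vec n \<Longrightarrow> u \<bullet> avg i j v = avg i j u \<bullet> v"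
  using avg_sprod[of u v] avg_sprod[of v u] comm_scalar_prod[of v n "avg i j u"] comm_scalar_prod[of u n v]
  by (simp add: algebra_simps)

lemma avg_norm: "u \<in> carrier_vec n \<Longrightarrow> avg i j u \<bullet> avg i j u = u \<bullet> u - (u $ i - u $ j)^2 / 2"
proof -
  assume u: "u \<in> carrier_vec n"
  have "avg i j u \<bullet> avg i j u = avg i j u \<bullet> u - (avg i j u $ i - avg i j u $ j) * (u $ i - u $ j) / 2"
    by (rule avg_sprod, insert u, auto)
  also have "avg i j u $ i - avg i j u $ j = 0" using avg_idx[OF u] ij by simp
  also have "avg i j u \<bullet> u = u \<bullet> avg i j u" by (rule comm_scalar_prod[of _ n], insert u, auto)
  also have "\<dots> = u \<bullet> u - (u $ i - u $ j)^2 / 2" using avg_sprod[OF u u] by (simp add: power2_eq_square)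
  finally show ?thesis by simp
qed

end


lemma cs_vec_abs:
  fixes x w :: "real vec" assumes "x \<in> carrier_vec d" "w \<in> carrier_vec d"
  shows "\<bar>x \<bullet> w\<bar> \<le> sqrt (x \<bullet> x) * sqrt (w \<bullet> w)"
proof -
  have "(x \<bullet> w)^2 \<le> (x \<bullet> x) * (w \<bullet> w)"
    using cs_sum_sq[of "\<lambda>i. x $ i" "\<lambda>i. w $ i" "{0..<d}"] assms
    by (simp add: scalar_prod_def power2_eq_square)
  hence "sqrt ((x \<bullet> w)^2) \<le> sqrt ((x \<bullet> x) * (w \<bullet> w))" by (rule real_sqrt_le_mono)
  thus ?thesis by (simp add: real_sqrt_mult)
qed

lemma sqrt_le_lin: "0 \<le> t \<Longrightarrow> t \<le> 2 \<Longrightarrow> sqrt (1 - t / 2) \<le> 1 - t / 4"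
proof -
  assume t: "0 \<le> t" "t \<le> 2"
  have "sqrt (1 - t / 2) \<le> sqrt ((1 - t / 4)^2)"
    by (rule real_sqrt_le_mono, insert t, simp add: power2_eq_square field_simps)
  also have "\<dots> = 1 - t / 4" using t by simp
  finally show ?thesis .
qed

lemma gap:
  fixes A Ab :: "real mat"
  assumes A: "A \<in> carrier_mat d n" and Ab: "Ab \<in> carrier_mat d n" and ij: "i < n" "j < n" "i \<noteq> j"
    and rel: "\<And>q. q \<in> carrier_vec n \<Longrightarrow> Ab *\<^sub>v q = A *\<^sub>v avg i j q"
  shows "(A *\<^sub>v (unit_vec n i - unit_vec n j)) \<bullet> (A *\<^sub>v (unit_vec n i - unit_vec n j))
     \<le> 4 * (nuclear_norm A - nuclear_norm Ab) * nuclear_norm A"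
proof -
  obtain U where U: "U \<in> carrier_mat n n" "transpose_mat U * U = 1\<^sub>m n" "U * transpose_mat U = 1\<^sub>m n"
    and nnA: "nuclear_norm A = (\<Sum>k<n. sqrt ((A *\<^sub>v col U k) \<bullet> (A *\<^sub>v col U k)))"
    using nuclear_eigen[OF A] by blast
  define a where "a k = sqrt ((A *\<^sub>v col U k) \<bullet> (A *\<^sub>v col U k))" for k
  define dk where "dk k = col U k $ i - col U k $ j" for k
  have a0: "a k \<ge> 0" for k unfolding a_def by (simp add: self_sprod_nonneg)
  have uc: "col U k \<in> carrier_vec n" if "k < n" for k using U that by auto
  have u1: "col U k \<bullet> col U k = 1" if "k < n" for k using col_unit_norm[OF U(1,2) that] .
  have nnA': "nuclear_norm A = (\<Sum>k<n. a k)" unfolding nnA a_def ..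
  obtain V w where V: "V \<in> carrier_mat n n" "transpose_mat V * V = 1\<^sub>m n" "V * transpose_mat V = 1\<^sub>m n"
    and wc: "\<And>m. m < n \<Longrightarrow> w m \<in> carrier_vec d \<and> w m \<bullet> w m \<le> 1"
    and bess: "\<And>z. z \<in> carrier_vec d \<Longrightarrow> (\<Sum>m<n. (z \<bullet> w m)^2) \<le> z \<bullet> z"
    and nnAb: "nuclear_norm Ab = (\<Sum>m<n. (Ab *\<^sub>v col V m) \<bullet> w m)"
    using nuclear_repr[OF Ab] by blast
  have vc: "col V m \<in> carrier_vec n" if "m < n" for m using V that by auto
  have "nuclear_norm Ab = (\<Sum>m<n. (A *\<^sub>v avg i j (col V m)) \<bullet> w m)"
    unfolding nnAb by (intro sum.cong refl, subst rel, insert vc, auto)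
  also have "\<dots> \<le> (\<Sum>k<n. sqrt (\<Sum>m<n. (col U k \<bullet> avg i j (col V m))^2) * a k)"
    unfolding a_def by (rule dual_bound[OF A U(1) U(3)], insert vc wc bess ij, auto)
  also have "\<dots> = (\<Sum>k<n. sqrt (1 - (dk k)^2 / 2) * a k)"
  proof (intro sum.cong refl)
    fix k assume k: "k \<in> {..<n}"
    have "(\<Sum>m<n. (col U k \<bullet> avg i j (col V m))^2) = (\<Sum>m<n. (col V m \<bullet> avg i j (col U k))^2)"
    proof (intro sum.cong refl)
      fix m assume m: "m \<in> {..<n}"
      have "col U k \<bullet> avg i j (col V m) = avg i j (col U k) \<bullet> col V m"
        by (rule avg_sym[OF ij], insert uc vc k m, auto)
      also have "\<dots> = col V m \<bullet> avg i j (col U k)"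
        by (rule comm_scalar_prod[of _ n], insert uc vc k m ij, auto)
      finally show "(col U k \<bullet> avg i j (col V m))^2 = (col V m \<bullet> avg i j (col U k))^2" by simp
    qed
    also have "\<dots> = avg i j (col U k) \<bullet> avg i j (col U k)"
      by (rule parseval[OF V(1,3)], insert uc k ij, auto)
    also have "\<dots> = 1 - (dk k)^2 / 2" using avg_norm[OF ij uc[of k]] unfolding dk_def using u1 k by auto
    finally show "sqrt (\<Sum>m<n. (col U k \<bullet> avg i j (col V m))^2) * a k = sqrt (1 - (dk k)^2 / 2) * a k"
      by simp
  qed
  also have "\<dots> \<le> (\<Sum>k<n. (1 - (dk k)^2 / 4) * a k)"
  proof (intro sum_mono mult_right_mono a0)
    fix k assume k: "k \<in> {..<n}"
    have "0 \<le> avg i j (col U k) \<bullet> avg i j (col U k)" by (rule self_sprod_nonneg)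
    hence "(dk k)^2 \<le> 2" using avg_norm[OF ij uc[of k]] unfolding dk_def using u1 k by auto
    thus "sqrt (1 - (dk k)^2 / 2) \<le> 1 - (dk k)^2 / 4" by (intro sqrt_le_lin) auto
  qed
  also have "\<dots> = nuclear_norm A - (\<Sum>k<n. (dk k)^2 * a k) / 4"
    unfolding nnA' by (simp add: algebra_simps sum_subtractf sum_divide_distrib)
  finally have stepA: "(\<Sum>k<n. (dk k)^2 * a k) \<le> 4 * (nuclear_norm A - nuclear_norm Ab)" by simp
  define e :: "real vec" where "e = unit_vec n i - unit_vec n j"
  have ec: "e \<in> carrier_vec n" unfolding e_def by auto
  define z where "z = A *\<^sub>v e"
  have zc: "z \<in> carrier_vec d" unfolding z_def using A ec by auto
  define s where "s = sqrt (z \<bullet> z)"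
  have s0: "s \<ge> 0" unfolding s_def by (simp add: self_sprod_nonneg)
  have ss: "z \<bullet> z = s^2" unfolding s_def using self_sprod_nonneg by simp
  define S where "S = (\<Sum>k<n. \<bar>dk k\<bar> * a k)"
  have S0: "S \<ge> 0" unfolding S_def using a0 by (simp add: sum_nonneg)
  have "z \<bullet> z = (\<Sum>k<n. (col U k \<bullet> e) * ((A *\<^sub>v col U k) \<bullet> z))"
    by (subst (1) z_def, rule expansion[OF A U(1) U(3) ec zc])
  also have "\<dots> \<le> (\<Sum>k<n. \<bar>dk k\<bar> * (a k * s))"
  proof (intro sum_mono)
    fix k assume k: "k \<in> {..<n}"
    have ue: "col U k \<bullet> e = dk k" unfolding e_def dk_def using uc k ij
      by (subst scalar_prod_minus_distrib[of _ n], auto)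
    have Au: "A *\<^sub>v col U k \<in> carrier_vec d" using A uc k by auto
    have "\<bar>(A *\<^sub>v col U k) \<bullet> z\<bar> \<le> a k * s" unfolding a_def s_def by (rule cs_vec_abs[OF Au zc])
    have "(col U k \<bullet> e) * ((A *\<^sub>v col U k) \<bullet> z) \<le> \<bar>dk k * ((A *\<^sub>v col U k) \<bullet> z)\<bar>" 
      unfolding ue by simp
    also have "\<dots> = \<bar>dk k\<bar> * \<bar>(A *\<^sub>v col U k) \<bullet> z\<bar>" by (rule abs_mult)
    also have "\<dots> \<le> \<bar>dk k\<bar> * (a k * s)" by (rule mult_left_mono[OF \<open>\<bar>(A *\<^sub>v col U k) \<bullet> z\<bar> \<le> a k * s\<close>], simp)
    finally show "(col U k \<bullet> e) * ((A *\<^sub>v col U k) \<bullet> z) \<le> \<bar>dk k\<bar> * (a k * s)" .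
  qed
  also have "\<dots> = S * s" unfolding S_def by (simp add: sum_distrib_right mult.assoc)
  finally have "s * s \<le> S * s" using ss by (simp add: power2_eq_square)
  hence sS: "s \<le> S" using s0 S0 by (cases "s = 0", auto)
  have "z \<bullet> z \<le> S^2" unfolding ss using sS s0 by (simp add: power_mono)
  also have "S^2 \<le> (\<Sum>k<n. (\<bar>dk k\<bar> * sqrt (a k))^2) * (\<Sum>k<n. (sqrt (a k))^2)"
  proof -
    have SS: "S = (\<Sum>k<n. (\<bar>dk k\<bar> * sqrt (a k)) * sqrt (a k))" unfolding S_def
      by (intro sum.cong refl, simp add: a0 mult.assoc)
    show ?thesis unfolding SS by (rule cs_sum_sq)
  qed
  also have "\<dots> = (\<Sum>k<n. (dk k)^2 * a k) * nuclear_norm A"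
    unfolding nnA' using a0 by (simp add: power_mult_distrib)
  also have "\<dots> \<le> 4 * (nuclear_norm A - nuclear_norm Ab) * nuclear_norm A"
    by (rule mult_right_mono[OF stepA nuclear_nonneg[OF A]])
  finally show ?thesis unfolding z_def e_def .
qed

lemma mv_idx: "A \<in> carrier_mat d n \<Longrightarrow> u \<in> carrier_vec n \<Longrightarrow> r < d \<Longrightarrow>
   (A *\<^sub>v u) $ r = (\<Sum>l<n. A $$ (r,l) * u $ l)"
  by (simp add: scalar_prod_def lessThan_atLeast0)

lemma Diag_carrier: "w \<in> carrier_vec n \<Longrightarrow> Diag w \<in> carrier_mat n n"
  unfolding Diag_def by auto

lemma diag_mult_vec:
  fixes X :: "real mat"
  assumes X: "X \<in> carrier_mat d n" and w: "w \<in> carrier_vec n" and q: "q \<in> carrier_vec n"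
  shows "(X * Diag w) *\<^sub>v q = X *\<^sub>v vec n (\<lambda>l. w $ l * q $ l)"
proof -
  have D: "Diag w \<in> carrier_mat n n" by (rule Diag_carrier[OF w])
  have "Diag w *\<^sub>v q = vec n (\<lambda>l. w $ l * q $ l)"
  proof (rule eq_vecI)
    fix l assume "l < dim_vec (vec n (\<lambda>l. w $ l * q $ l))"
    hence l: "l < n" by simp
    have "(Diag w *\<^sub>v q) $ l = (\<Sum>l'<n. Diag w $$ (l,l') * q $ l')" by (rule mv_idx[OF D q l])
    also have "\<dots> = (\<Sum>l'<n. if l' = l then w $ l * q $ l else 0)"
      by (intro sum.cong refl, insert w l, auto simp: Diag_def)
    also have "\<dots> = w $ l * q $ l" using l by simp
    finally show "(Diag w *\<^sub>v q) $ l = vec n (\<lambda>l. w $ l * q $ l) $ l" using l by simp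
  qed (insert D, auto)
  thus ?thesis using X D q by simp
qed

lemma nuclear_zero_mat: "nuclear_norm (0\<^sub>m d n :: real mat) = 0"
proof -
  obtain U where U: "U \<in> carrier_mat n n" and 
    nn: "nuclear_norm (0\<^sub>m d n :: real mat) = (\<Sum>k<n. sqrt ((0\<^sub>m d n *\<^sub>v col U k) \<bullet> (0\<^sub>m d n *\<^sub>v col U k)))"
    using nuclear_eigen[of "0\<^sub>m d n :: real mat" d n] by auto
  have z: "(0\<^sub>m d n :: real mat) *\<^sub>v col U k = 0\<^sub>v d" if "k < n" for k
    by (rule eq_vecI, insert U that, auto simp: scalar_prod_def)
  show ?thesis unfolding nn using U z by (intro sum.neutral) auto
qed

lemma diag_zero: fixes X :: "real mat" assumes X: "X \<in> carrier_mat d n"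
  shows "X * Diag (0\<^sub>v n) = 0\<^sub>m d n"
  using X by (intro eq_matI, auto simp: Diag_def scalar_prod_def)

lemma mult_unit_col: fixes X :: "real mat" assumes X: "X \<in> carrier_mat d n" and l: "l < n"
  shows "X *\<^sub>v unit_vec n l = col X l"
  by (rule eq_vecI, insert X l, auto simp: comm_scalar_prod[of _ n])

lemma smult_sq: "(c \<cdot>\<^sub>v v) \<bullet> (c \<cdot>\<^sub>v v) = c^2 * (v \<bullet> (v :: real vec))"
  by (simp add: scalar_prod_def sum_distrib_left power2_eq_square mult_ac)

lemma sqrt_smult_sq: "sqrt ((c \<cdot>\<^sub>v v) \<bullet> (c \<cdot>\<^sub>v v)) = \<bar>c\<bar> * sqrt (v \<bullet> (v :: real vec))"
  unfolding smult_sq by (simp add: real_sqrt_mult)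

lemma diag_col: fixes X :: "real mat" assumes X: "X \<in> carrier_mat d n" and w: "w \<in> carrier_vec n" and l: "l < n"
  shows "(X * Diag w) *\<^sub>v unit_vec n l = (w $ l) \<cdot>\<^sub>v col X l"
proof -
  have "vec n (\<lambda>l'. w $ l' * unit_vec n l $ l') = (w $ l) \<cdot>\<^sub>v unit_vec n l"
    by (rule eq_vecI, auto simp: unit_vec_def)
  thus ?thesis unfolding diag_mult_vec[OF X w unit_vec_carrier] using X l
    by (simp add: mult_mat_vec mult_unit_col)
qed

lemma diag_entry: fixes X :: "real mat"
  assumes X: "X \<in> carrier_mat d n" and w: "w \<in> carrier_vec n" and r: "r < d" and l: "l < n"
  shows "(X * Diag w) $$ (r,l) = X $$ (r,l) * w $ l"
proof -
  have "(X * Diag w) $$ (r,l) = (\<Sum>l'<n. X $$ (r,l') * Diag w $$ (l',l))"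
    using X w r l by (simp add: scalar_prod_def lessThan_atLeast0 Diag_def)
  also have "\<dots> = (\<Sum>l'<n. if l' = l then X $$ (r,l) * w $ l else 0)"
    by (intro sum.cong refl, insert w l, auto simp: Diag_def)
  finally show ?thesis using l by simp
qed

lemma self_sprod_zero: "(v :: real vec) \<in> carrier_vec d \<Longrightarrow> v \<bullet> v = 0 \<Longrightarrow> v = 0\<^sub>v d"
proof -
  assume v: "v \<in> carrier_vec d" and vv: "v \<bullet> v = 0"
  have "(\<Sum>r\<in>{0..<d}. (v $ r)^2) = 0" using vv v sprod_sq[of v] by simp
  hence "\<forall>r\<in>{0..<d}. (v $ r)^2 = 0" by (subst (asm) sum_nonneg_eq_0_iff) auto
  thus ?thesis using v by (intro eq_vecI) auto
qed

lemma sq_le_sprod: "(v :: real vec) \<in> carrier_vec n \<Longrightarrow> l < n \<Longrightarrow> (v $ l)^2 \<le> v \<bullet> v"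
  unfolding sprod_sq by (rule member_le_sum) auto

lemma sum_two_if: "i < (n::nat) \<Longrightarrow> j < n \<Longrightarrow> i \<noteq> j \<Longrightarrow>
  (\<Sum>l<n. if l = i then (aa :: real) else if l = j then bb else 0) = aa + bb"
proof -
  assume ij: "i < n" "j < n" "i \<noteq> j"
  have "(\<Sum>l<n. if l = i then (aa :: real) else if l = j then bb else 0) = 
    (\<Sum>l<n. (if l = i then aa else 0) + (if l = j then bb else 0))"
    by (intro sum.cong refl, insert ij, auto)
  also have "\<dots> = (\<Sum>l<n. if l = i then aa else 0) + (\<Sum>l<n. if l = j then bb else 0)"
    by (rule sum.distrib)
  also have "(\<Sum>l<n. if l = i then aa else 0) = aa" using ij(1) by simp
  also have "(\<Sum>l<n. if l = j then bb else 0) = bb" using ij(2) by simp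
  finally show ?thesis .
qed

theorem theorem3:
  fixes d n i j :: nat and y :: "real vec" and lam :: real and X :: "real mat"
    and Xs :: "nat \<Rightarrow> real mat" and ws :: "nat \<Rightarrow> real vec"
  assumes "y \<in> carrier_vec d" and "lam > 0" and "X \<in> carrier_mat d n"
    and "i < n" and "j < n"
    and "\<And>k. Xs k \<in> carrier_mat d n"
    and "\<And>k l. l < n \<Longrightarrow> l \<noteq> i \<Longrightarrow> col (Xs k) l = col X l"
    and "\<And>r. r < d \<Longrightarrow> (\<lambda>k. Xs k $$ (r, i)) \<longlonglongrightarrow> X $$ (r, j)"
    and "\<And>k. ws k \<in> carrier_vec n"
    and "\<And>k v. v \<in> carrier_vec n \<Longrightarrow> v \<noteq> ws k \<Longrightarrow>
            trace_lasso_obj y lam (Xs k) (ws k) < trace_lasso_obj y lam (Xs k) v"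
  shows "(\<lambda>k. ws k $ i - ws k $ j) \<longlonglongrightarrow> 0"
proof (cases "i = j")
  case True thus ?thesis by simp
next
  case False
  note yc = assms(1) and lam = assms(2) and X = assms(3) and i = assms(4) and j = assms(5)
    and Xsc = assms(6) and colEq = assms(7) and conv = assms(8) and wsc = assms(9) and opt = assms(10)
  note ij = i j False
  have Xs_entry: "Xs k $$ (r,l) = X $$ (r,l)" if "r < d" "l < n" "l \<noteq> i" for k r l
    using arg_cong[OF colEq[OF that(2,3), of k], of "\<lambda>v. v $ r"] that X Xsc[of k] by simp
  define xj where "xj = col X j"
  have xjc: "xj \<in> carrier_vec d" unfolding xj_def using X j by auto
  define c where "c = xj \<bullet> xj"
  have c: "c > 0"
  proof (rule ccontr)
    assume "\<not> c > 0"
    hence "c = 0" using self_sprod_nonneg[of xj] unfolding c_def by linarith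
    hence xj0: "xj = 0\<^sub>v d" using self_sprod_zero[OF xjc] unfolding c_def by simp
    define v where "v = ws 0 + unit_vec n j"
    have vc: "v \<in> carrier_vec n" unfolding v_def using wsc[of 0] by auto
    have "v $ j \<noteq> ws 0 $ j" unfolding v_def using wsc[of 0] j by auto
    hence vne: "v \<noteq> ws 0" by auto
    have colj0: "col (Xs 0) j = 0\<^sub>v d" using colEq[OF j, of 0] False xj0 unfolding xj_def by auto
    have mv: "Xs 0 *\<^sub>v v = Xs 0 *\<^sub>v ws 0" unfolding v_def
      using Xsc[of 0] wsc[of 0] j colj0 by (simp add: mult_add_distrib_mat_vec mult_unit_col)
    have md: "Xs 0 * Diag v = Xs 0 * Diag (ws 0)"
    proof (rule eq_matI)
      fix r l assume "r < dim_row (Xs 0 * Diag (ws 0))" "l < dim_col (Xs 0 * Diag (ws 0))"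
      hence r: "r < d" and l: "l < n" using Xsc[of 0] Diag_carrier[OF wsc[of 0]] by auto
      have "Xs 0 $$ (r, j) = 0" using arg_cong[OF colj0, of "\<lambda>x. x $ r"] r j Xsc[of 0] by simp
      thus "(Xs 0 * Diag v) $$ (r, l) = (Xs 0 * Diag (ws 0)) $$ (r, l)"
        unfolding diag_entry[OF Xsc vc r l] diag_entry[OF Xsc wsc r l]
        unfolding v_def using wsc[of 0] l by (auto simp: unit_vec_def)
    qed (insert Xsc[of 0] Diag_carrier[OF wsc[of 0]] Diag_carrier[OF vc], auto)
    have "trace_lasso_obj y lam (Xs 0) (ws 0) < trace_lasso_obj y lam (Xs 0) v" by (rule opt[OF vc vne])
    thus False unfolding trace_lasso_obj_def mv md by simp
  qed
  define Xp where "Xp = mat d n (\<lambda>(r,l). if l = i then X $$ (r,j) else X $$ (r,l))"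
  have Xp: "Xp \<in> carrier_mat d n" unfolding Xp_def by simp
  define \<delta> where "\<delta> k = col (Xs k) i - xj" for k
  have \<delta>c: "\<delta> k \<in> carrier_vec d" for k unfolding \<delta>_def using xjc Xsc[of k] i by (intro minus_carrier_vec) auto
  have \<delta>r: "\<delta> k $ r = Xs k $$ (r,i) - X $$ (r,j)" if "r < d" for k r
    unfolding \<delta>_def xj_def using that Xsc[of k] X i j by simp
  define dn where "dn k = sqrt (\<delta> k \<bullet> \<delta> k)" for k
  have dn0: "dn k \<ge> 0" for k unfolding dn_def by (simp add: self_sprod_nonneg)
  have Ldiff: "Xs k *\<^sub>v u - Xp *\<^sub>v u = (u $ i) \<cdot>\<^sub>v \<delta> k" if u: "u \<in> carrier_vec n" for k u
  proof (rule eq_vecI)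
    fix r assume "r < dim_vec ((u $ i) \<cdot>\<^sub>v \<delta> k)"
    hence r: "r < d" using \<delta>c[of k] by auto
    have "(Xs k *\<^sub>v u - Xp *\<^sub>v u) $ r = (Xs k *\<^sub>v u) $ r - (Xp *\<^sub>v u) $ r" using r Xsc[of k] Xp by simp
    also have "\<dots> = (\<Sum>l<n. (Xs k $$ (r,l) - Xp $$ (r,l)) * u $ l)"
      unfolding mv_idx[OF Xsc u r] mv_idx[OF Xp u r] by (simp add: sum_subtractf algebra_simps)
    also have "\<dots> = (\<Sum>l<n. if l = i then \<delta> k $ r * u $ i else 0)"
      by (intro sum.cong refl, insert r Xs_entry \<delta>r, auto simp: Xp_def)
    also have "\<dots> = ((u $ i) \<cdot>\<^sub>v \<delta> k) $ r" using i r \<delta>c[of k] by simp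
    finally show "(Xs k *\<^sub>v u - Xp *\<^sub>v u) $ r = ((u $ i) \<cdot>\<^sub>v \<delta> k) $ r" .
  qed (insert Xsc[of k] Xp \<delta>c[of k], auto)
  have Lsupp: "Xp *\<^sub>v D = (D $ i + D $ j) \<cdot>\<^sub>v xj"
    if D: "D \<in> carrier_vec n" and supp: "\<And>l. l < n \<Longrightarrow> l \<noteq> i \<Longrightarrow> l \<noteq> j \<Longrightarrow> D $ l = 0" for D
  proof (rule eq_vecI)
    fix r assume "r < dim_vec ((D $ i + D $ j) \<cdot>\<^sub>v xj)"
    hence r: "r < d" using xjc by auto
    have "(Xp *\<^sub>v D) $ r = (\<Sum>l<n. Xp $$ (r,l) * D $ l)" by (rule mv_idx[OF Xp D r])
    also have "\<dots> = (\<Sum>l<n. if l = i then X $$ (r,j) * D $ i else if l = j then X $$ (r,j) * D $ j else 0)"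
      by (intro sum.cong refl, insert r supp, auto simp: Xp_def)
    also have "\<dots> = X $$ (r,j) * D $ i + X $$ (r,j) * D $ j" by (rule sum_two_if[OF ij])
    also have "\<dots> = ((D $ i + D $ j) \<cdot>\<^sub>v xj) $ r" unfolding xj_def using r X j
      by (simp add: algebra_simps)
    finally show "(Xp *\<^sub>v D) $ r = ((D $ i + D $ j) \<cdot>\<^sub>v xj) $ r" .
  qed (insert Xp xjc, auto)
  have dn_lim: "dn \<longlonglongrightarrow> 0"
  proof -
    have e: "\<delta> k \<bullet> \<delta> k = (\<Sum>r<d. (Xs k $$ (r,i) - X $$ (r,j))^2)" for k
      unfolding sprod_idx[OF \<delta>c \<delta>c] using \<delta>r by (simp add: power2_eq_square)
    have "(\<lambda>k. \<Sum>r<d. (Xs k $$ (r,i) - X $$ (r,j))^2) \<longlonglongrightarrow> (\<Sum>r<d. (X $$ (r,j) - X $$ (r,j))^2)"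
      by (intro tendsto_sum tendsto_power tendsto_diff conv tendsto_const) auto
    hence "(\<lambda>k. \<delta> k \<bullet> \<delta> k) \<longlonglongrightarrow> 0" unfolding e by simp
    hence "(\<lambda>k. sqrt (\<delta> k \<bullet> \<delta> k)) \<longlonglongrightarrow> sqrt 0" by (rule tendsto_real_sqrt)
    thus ?thesis unfolding dn_def by simp
  qed
  define colsq where "colsq k = col (Xs k) i \<bullet> col (Xs k) i" for k
  have colsq_lim: "colsq \<longlonglongrightarrow> c"
  proof -
    have e: "colsq k = (\<Sum>r<d. (Xs k $$ (r,i))^2)" for k
      unfolding colsq_def using Xsc[of k] i by (subst sprod_idx[of _ d], auto simp: power2_eq_square)
    have c': "c = (\<Sum>r<d. (X $$ (r,j))^2)"
      unfolding c_def xj_def using X j by (subst sprod_idx[of _ d], auto simp: power2_eq_square)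
    show ?thesis unfolding e c'
      by (intro tendsto_sum tendsto_power conv) auto
  qed
  have ev_col: "eventually (\<lambda>k. colsq k > c / 2) sequentially"
    by (rule order_tendstoD(1)[OF colsq_lim], insert c, simp)
  have Ldiff2: "Xp *\<^sub>v u - Xs k *\<^sub>v u = (- (u $ i)) \<cdot>\<^sub>v \<delta> k" if u: "u \<in> carrier_vec n" for k u
  proof (rule eq_vecI)
    fix r assume "r < dim_vec ((- (u $ i)) \<cdot>\<^sub>v \<delta> k)"
    hence r: "r < d" using \<delta>c[of k] by auto
    have "(Xs k *\<^sub>v u - Xp *\<^sub>v u) $ r = ((u $ i) \<cdot>\<^sub>v \<delta> k) $ r" using Ldiff[OF u] by simp
    thus "(Xp *\<^sub>v u - Xs k *\<^sub>v u) $ r = ((- (u $ i)) \<cdot>\<^sub>v \<delta> k) $ r"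
      using r Xsc[of k] Xp \<delta>c[of k] by simp
  qed (insert Xsc[of k] Xp \<delta>c[of k], auto)
  define Y where "Y = (y \<bullet> y) / 2"
  define Cw where "Cw = (Y / lam) / sqrt (c / 2)"
  define E where "E k = (Cw * sqrt (2 * Y) * dn k + Cw^2 / 2 * (dn k)^2 + lam * n * (2 * Cw) * dn k) / lam" for k
  define K where "K k = Y / lam + n * Cw * dn k" for k
  define g where "g k = sqrt (4 * E k * K k / c)" for k
  have per_k: "\<bar>ws k $ i - ws k $ j\<bar> \<le> g k" if colk: "colsq k > c / 2" for k
  proof -
    define w where "w = ws k"
    have wc: "w \<in> carrier_vec n" unfolding w_def by (rule wsc)
    note Xk = Xsc[of k]
    let ?obj = "trace_lasso_obj y lam (Xs k)"
    have obj0: "?obj (0\<^sub>v n) = Y"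
    proof -
      have "Xs k *\<^sub>v 0\<^sub>v n = 0\<^sub>v d" using Xk by (intro eq_vecI, auto)
      moreover have "y - 0\<^sub>v d = y" using yc by auto
      ultimately show ?thesis unfolding trace_lasso_obj_def diag_zero[OF Xk] nuclear_zero_mat Y_def by simp
    qed
    have objw: "?obj w \<le> Y"
    proof (cases "w = 0\<^sub>v n")
      case True thus ?thesis using obj0 by simp
    next
      case False thus ?thesis using opt[of "0\<^sub>v n" k] obj0 unfolding w_def by auto
    qed
    define p where "p = y - Xs k *\<^sub>v w"
    have pc: "p \<in> carrier_vec d" unfolding p_def using yc Xk wc by auto
    define Ak where "Ak = Xs k * Diag w"
    have Akc: "Ak \<in> carrier_mat d n" unfolding Ak_def using Xk Diag_carrier[OF wc] by auto
    have NAk0: "nuclear_norm Ak \<ge> 0" by (rule nuclear_nonneg[OF Akc])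
    have objw': "?obj w = (p \<bullet> p) / 2 + lam * nuclear_norm Ak" unfolding trace_lasso_obj_def p_def Ak_def by simp
    have pp0: "p \<bullet> p \<ge> 0" by (rule self_sprod_nonneg)
    have NAk: "nuclear_norm Ak \<le> Y / lam" using objw objw' pp0 lam
      by (simp add: pos_le_divide_eq mult.commute)
    have "lam * nuclear_norm Ak \<ge> 0" using NAk0 lam by simp
    hence pp: "p \<bullet> p \<le> 2 * Y" using objw objw' by linarith
    have Y0: "Y \<ge> 0" unfolding Y_def by (simp add: self_sprod_nonneg)
    have sc2: "sqrt (c / 2) > 0" using c by simp
    have Cw0: "Cw \<ge> 0" unfolding Cw_def using Y0 lam sc2 by simp
    have wi: "\<bar>w $ i\<bar> \<le> Cw"
    proof -
      have "sqrt ((Ak *\<^sub>v unit_vec n i) \<bullet> (Ak *\<^sub>v unit_vec n i)) \<le> nuclear_norm Ak" by (rule col_le_N[OF Akc i])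
      also have "Ak *\<^sub>v unit_vec n i = (w $ i) \<cdot>\<^sub>v col (Xs k) i" unfolding Ak_def by (rule diag_col[OF Xk wc i])
      finally have "\<bar>w $ i\<bar> * sqrt (colsq k) \<le> Y / lam" unfolding sqrt_smult_sq colsq_def using NAk by simp
      moreover have "\<bar>w $ i\<bar> * sqrt (c / 2) \<le> \<bar>w $ i\<bar> * sqrt (colsq k)"
        by (rule mult_left_mono, insert colk, auto)
      ultimately have "\<bar>w $ i\<bar> * sqrt (c / 2) \<le> Y / lam" by simp
      thus ?thesis by (simp only: Cw_def pos_le_divide_eq[OF sc2])
    qed
    have wj: "\<bar>w $ j\<bar> \<le> Cw"
    proof -
      have "sqrt ((Ak *\<^sub>v unit_vec n j) \<bullet> (Ak *\<^sub>v unit_vec n j)) \<le> nuclear_norm Ak" by (rule col_le_N[OF Akc j])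
      also have "Ak *\<^sub>v unit_vec n j = (w $ j) \<cdot>\<^sub>v xj" unfolding Ak_def diag_col[OF Xk wc j]
        xj_def using colEq[OF j, of k] False by simp
      finally have "\<bar>w $ j\<bar> * sqrt c \<le> Y / lam" unfolding sqrt_smult_sq c_def[symmetric] using NAk by simp
      moreover have "\<bar>w $ j\<bar> * sqrt (c / 2) \<le> \<bar>w $ j\<bar> * sqrt c"
        by (rule mult_left_mono, insert c, auto)
      ultimately have "\<bar>w $ j\<bar> * sqrt (c / 2) \<le> Y / lam" by simp
      thus ?thesis by (simp only: Cw_def pos_le_divide_eq[OF sc2])
    qed
    define t where "t = (w $ i - w $ j) / 2"
    define m where "m = (w $ i + w $ j) / 2"
    define wb where "wb = avg i j w"
    have wbc: "wb \<in> carrier_vec n" unfolding wb_def using wc ij by simp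
    have wbi: "wb $ i = m" and wbj: "wb $ j = m"
      unfolding wb_def m_def using avg_idx[OF ij wc] ij by auto
    define e :: "real vec" where "e = unit_vec n i - unit_vec n j"
    have ec: "e \<in> carrier_vec n" unfolding e_def by auto
    have wb_eq: "wb = w - t \<cdot>\<^sub>v e" unfolding wb_def avg_def t_def e_def using wc by simp
    have Xe: "Xs k *\<^sub>v e = \<delta> k" unfolding e_def \<delta>_def
      using Xk i j mult_unit_col[OF Xk i] mult_unit_col[OF Xk j] colEq[OF j, of k] False xj_def
      by (simp add: mult_minus_distrib_mat_vec)
    have Xwb: "Xs k *\<^sub>v wb = Xs k *\<^sub>v w - t \<cdot>\<^sub>v \<delta> k"
      unfolding wb_eq using Xk wc ec by (simp add: mult_minus_distrib_mat_vec mult_mat_vec Xe)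
    define q where "q = y - Xs k *\<^sub>v wb"
    have qr: "q $ r = p $ r + t * \<delta> k $ r" if "r < d" for r
      unfolding q_def p_def Xwb using that yc Xk wc \<delta>c[of k] by simp
    have qc: "q \<in> carrier_vec d" unfolding q_def using yc Xk wbc by auto
    have data: "(q \<bullet> q) / 2 - (p \<bullet> p) / 2 = t * (p \<bullet> \<delta> k) + t^2 / 2 * (\<delta> k \<bullet> \<delta> k)"
      unfolding sprod_idx[OF qc qc] sprod_idx[OF pc pc] sprod_idx[OF pc \<delta>c] sprod_idx[OF \<delta>c \<delta>c]
      using qr by (simp add: algebra_simps power2_eq_square sum.distrib sum_distrib_left sum_divide_distrib)
    define A where "A = Xp * Diag w"
    define Ab where "Ab = Xp * Diag wb"
    define Bk where "Bk = Xs k * Diag wb"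
    have Ac: "A \<in> carrier_mat d n" unfolding A_def using Xp Diag_carrier[OF wc] by auto
    have Abc: "Ab \<in> carrier_mat d n" unfolding Ab_def using Xp Diag_carrier[OF wbc] by auto
    have Bkc: "Bk \<in> carrier_mat d n" unfolding Bk_def using Xk Diag_carrier[OF wbc] by auto
    have vi1: "\<bar>v $ i\<bar> \<le> 1" if "v \<in> carrier_vec n" "v \<bullet> v \<le> 1" for v :: "real vec"
      using sq_le_sprod[OF that(1) i] that(2) abs_square_le_1[of "v $ i"] by linarith
    have pertA: "nuclear_norm A \<le> nuclear_norm Ak + n * (\<bar>w $ i\<bar> * dn k)"
    proof (rule perturb[OF Akc Ac])
      fix v :: "real vec" assume v: "v \<in> carrier_vec n" "v \<bullet> v \<le> 1"
      define u where "u = vec n (\<lambda>l. w $ l * v $ l)"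
      have uc: "u \<in> carrier_vec n" unfolding u_def by simp
      have "A *\<^sub>v v - Ak *\<^sub>v v = Xp *\<^sub>v u - Xs k *\<^sub>v u"
        unfolding A_def Ak_def u_def diag_mult_vec[OF Xp wc v(1)] diag_mult_vec[OF Xk wc v(1)] ..
      also have "\<dots> = (- (u $ i)) \<cdot>\<^sub>v \<delta> k" by (rule Ldiff2[OF uc])
      finally have eq: "A *\<^sub>v v - Ak *\<^sub>v v = (- (u $ i)) \<cdot>\<^sub>v \<delta> k" .
      have "sqrt ((A *\<^sub>v v - Ak *\<^sub>v v) \<bullet> (A *\<^sub>v v - Ak *\<^sub>v v)) = \<bar>- (u $ i)\<bar> * dn k"
        unfolding eq sqrt_smult_sq dn_def ..
      also have "\<dots> = \<bar>w $ i\<bar> * \<bar>v $ i\<bar> * dn k" unfolding u_def using i by (simp add: abs_mult)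
      also have "\<dots> \<le> \<bar>w $ i\<bar> * 1 * dn k"
        by (intro mult_right_mono mult_left_mono vi1 v dn0) auto
      finally show "sqrt ((A *\<^sub>v v - Ak *\<^sub>v v) \<bullet> (A *\<^sub>v v - Ak *\<^sub>v v)) \<le> \<bar>w $ i\<bar> * dn k" by simp
    qed
    have pertB: "nuclear_norm Bk \<le> nuclear_norm Ab + n * (\<bar>m\<bar> * dn k)"
    proof (rule perturb[OF Abc Bkc])
      fix v :: "real vec" assume v: "v \<in> carrier_vec n" "v \<bullet> v \<le> 1"
      define u where "u = vec n (\<lambda>l. wb $ l * v $ l)"
      have uc: "u \<in> carrier_vec n" unfolding u_def by simp
      have "Bk *\<^sub>v v - Ab *\<^sub>v v = Xs k *\<^sub>v u - Xp *\<^sub>v u"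
        unfolding Ab_def Bk_def u_def diag_mult_vec[OF Xp wbc v(1)] diag_mult_vec[OF Xk wbc v(1)] ..
      also have "\<dots> = (u $ i) \<cdot>\<^sub>v \<delta> k" by (rule Ldiff[OF uc])
      finally have eq: "Bk *\<^sub>v v - Ab *\<^sub>v v = (u $ i) \<cdot>\<^sub>v \<delta> k" .
      have "sqrt ((Bk *\<^sub>v v - Ab *\<^sub>v v) \<bullet> (Bk *\<^sub>v v - Ab *\<^sub>v v)) = \<bar>u $ i\<bar> * dn k"
        unfolding eq sqrt_smult_sq dn_def ..
      also have "\<dots> = \<bar>m\<bar> * \<bar>v $ i\<bar> * dn k" unfolding u_def using i wbi by (simp add: abs_mult)
      also have "\<dots> \<le> \<bar>m\<bar> * 1 * dn k"
        by (intro mult_right_mono mult_left_mono vi1 v dn0) auto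
      finally show "sqrt ((Bk *\<^sub>v v - Ab *\<^sub>v v) \<bullet> (Bk *\<^sub>v v - Ab *\<^sub>v v)) \<le> \<bar>m\<bar> * dn k" by simp
    qed
    have objwb: "?obj wb = (q \<bullet> q) / 2 + lam * nuclear_norm Bk" unfolding trace_lasso_obj_def q_def Bk_def by simp
    have opt2: "?obj w \<le> ?obj wb"
    proof (cases "wb = w")
      case False thus ?thesis using opt[OF wbc, of k] unfolding w_def by auto
    qed simp
    have rel: "Ab *\<^sub>v q' = A *\<^sub>v avg i j q'" if q': "q' \<in> carrier_vec n" for q'
    proof -
      define a where "a = vec n (\<lambda>l. wb $ l * q' $ l)"
      define b where "b = vec n (\<lambda>l. w $ l * avg i j q' $ l)"
      have ac: "a \<in> carrier_vec n" and bc: "b \<in> carrier_vec n" unfolding a_def b_def by auto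
      have 1: "Ab *\<^sub>v q' = Xp *\<^sub>v a" unfolding Ab_def a_def by (rule diag_mult_vec[OF Xp wbc q'])
      have 2: "A *\<^sub>v avg i j q' = Xp *\<^sub>v b" unfolding A_def b_def
        by (rule diag_mult_vec[OF Xp wc], insert q' ij, simp)
      have D: "Xp *\<^sub>v (a - b) = ((a - b) $ i + (a - b) $ j) \<cdot>\<^sub>v xj"
      proof (rule Lsupp)
        fix l assume l: "l < n" "l \<noteq> i" "l \<noteq> j"
        show "(a - b) $ l = 0" unfolding a_def b_def wb_def
          using l avg_idx[OF ij wc l(1)] avg_idx[OF ij q' l(1)] by simp
      qed (insert ac bc, auto)
      have ai: "avg i j q' $ i = (q' $ i + q' $ j) / 2" using avg_idx[OF ij q' i] by simp
      have aj: "avg i j q' $ j = (q' $ i + q' $ j) / 2" using avg_idx[OF ij q' j] by simp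
      have "(a - b) $ i + (a - b) $ j = m * q' $ i - w $ i * ((q' $ i + q' $ j) / 2) + (m * q' $ j - w $ j * ((q' $ i + q' $ j) / 2))"
        unfolding a_def b_def using ij ac bc by (simp add: wbi wbj ai aj)
      also have "\<dots> = 0" unfolding m_def by (simp add: field_simps)
      finally have "(a - b) $ i + (a - b) $ j = 0" .
      hence zz: "Xp *\<^sub>v a - Xp *\<^sub>v b = 0 \<cdot>\<^sub>v xj" using D Xp ac bc by (simp add: mult_minus_distrib_mat_vec)
      have "Xp *\<^sub>v a = Xp *\<^sub>v b"
      proof (rule eq_vecI)
        fix r assume "r < dim_vec (Xp *\<^sub>v b)"
        hence r: "r < d" using Xp by simp
        from arg_cong[OF zz, of "\<lambda>x. x $ r"] show "(Xp *\<^sub>v a) $ r = (Xp *\<^sub>v b) $ r"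
          using r Xp ac bc xjc by simp
      qed (insert Xp, simp)
      thus ?thesis using 1 2 by simp
    qed
    have Ae: "A *\<^sub>v e = (w $ i - w $ j) \<cdot>\<^sub>v xj"
    proof -
      define D where "D = vec n (\<lambda>l. w $ l * e $ l)"
      have "A *\<^sub>v e = Xp *\<^sub>v D" unfolding A_def D_def by (rule diag_mult_vec[OF Xp wc ec])
      also have "\<dots> = (D $ i + D $ j) \<cdot>\<^sub>v xj"
        by (rule Lsupp, unfold D_def e_def, insert ij, auto)
      also have "D $ i + D $ j = w $ i - w $ j" unfolding D_def e_def using ij by simp
      finally show ?thesis .
    qed
    have gapk: "(w $ i - w $ j)^2 * c \<le> 4 * (nuclear_norm A - nuclear_norm Ab) * nuclear_norm A"
      using gap[OF Ac Abc ij rel] unfolding e_def[symmetric] Ae smult_sq c_def by simp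
    have h1: "lam * (nuclear_norm Ak - nuclear_norm Bk) \<le> t * (p \<bullet> \<delta> k) + t^2 / 2 * (\<delta> k \<bullet> \<delta> k)"
      unfolding right_diff_distrib using opt2 objw' objwb data by linarith
    have tb: "\<bar>t\<bar> \<le> Cw" unfolding t_def using wi wj by (simp add: abs_le_iff)
    have mb: "\<bar>m\<bar> \<le> Cw" unfolding m_def using wi wj by (simp add: abs_le_iff)
    have t2: "t^2 \<le> Cw^2" using tb by (metis abs_le_square_iff abs_of_nonneg Cw0 power2_abs)
    have spp: "sqrt (p \<bullet> p) \<le> sqrt (2 * Y)" using pp by simp
    have "t * (p \<bullet> \<delta> k) \<le> \<bar>t\<bar> * \<bar>p \<bullet> \<delta> k\<bar>" by (simp add: abs_mult[symmetric])
    also have "\<dots> \<le> Cw * (sqrt (2 * Y) * dn k)"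
    proof (rule mult_mono[OF tb])
      have "\<bar>p \<bullet> \<delta> k\<bar> \<le> sqrt (p \<bullet> p) * dn k" unfolding dn_def by (rule cs_vec_abs[OF pc \<delta>c])
      also have "\<dots> \<le> sqrt (2 * Y) * dn k" by (rule mult_right_mono[OF spp dn0])
      finally show "\<bar>p \<bullet> \<delta> k\<bar> \<le> sqrt (2 * Y) * dn k" .
    qed (auto simp: Cw0)
    finally have h2: "t * (p \<bullet> \<delta> k) \<le> Cw * sqrt (2 * Y) * dn k" by simp
    have "\<delta> k \<bullet> \<delta> k = (dn k)^2" unfolding dn_def by (simp add: self_sprod_nonneg)
    hence h3: "t^2 / 2 * (\<delta> k \<bullet> \<delta> k) \<le> Cw^2 / 2 * (dn k)^2"
      using t2 by (simp add: mult_right_mono)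
    have h4: "lam * (nuclear_norm Ak - nuclear_norm Bk) \<le> Cw * sqrt (2 * Y) * dn k + Cw^2 / 2 * (dn k)^2"
      using h1 h2 h3 by linarith
    have "n * (\<bar>w $ i\<bar> * dn k) + n * (\<bar>m\<bar> * dn k) \<le> n * (Cw * dn k) + n * (Cw * dn k)"
      by (intro add_mono mult_left_mono mult_right_mono wi mb dn0) auto
    hence h5: "nuclear_norm A - nuclear_norm Ab \<le> (nuclear_norm Ak - nuclear_norm Bk) + n * (2 * Cw) * dn k"
      using pertA pertB by (simp add: algebra_simps)
    have EA: "nuclear_norm A - nuclear_norm Ab \<le> E k"
    proof -
      have "nuclear_norm Ak - nuclear_norm Bk \<le> (Cw * sqrt (2 * Y) * dn k + Cw^2 / 2 * (dn k)^2) / lam"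
        using h4 lam by (simp add: pos_le_divide_eq mult.commute)
      hence "nuclear_norm A - nuclear_norm Ab \<le> (Cw * sqrt (2 * Y) * dn k + Cw^2 / 2 * (dn k)^2) / lam + n * (2 * Cw) * dn k"
        using h5 by linarith
      also have "\<dots> = E k" unfolding E_def using lam by (simp add: field_simps)
      finally show ?thesis .
    qed
    have KA: "nuclear_norm A \<le> K k"
    proof -
      have "n * (\<bar>w $ i\<bar> * dn k) \<le> n * (Cw * dn k)" by (intro mult_left_mono mult_right_mono wi dn0) auto
      thus ?thesis using pertA NAk unfolding K_def by simp
    qed
    have NA0: "nuclear_norm A \<ge> 0" by (rule nuclear_nonneg[OF Ac])
    have E0: "E k \<ge> 0" unfolding E_def using lam Cw0 dn0[of k] Y0 by (intro divide_nonneg_pos add_nonneg_nonneg mult_nonneg_nonneg) auto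
    have "(nuclear_norm A - nuclear_norm Ab) * nuclear_norm A \<le> E k * nuclear_norm A"
      by (rule mult_right_mono[OF EA NA0])
    also have "\<dots> \<le> E k * K k" by (rule mult_left_mono[OF KA E0])
    finally have "(w $ i - w $ j)^2 * c \<le> 4 * (E k * K k)" using gapk by linarith
    hence "(w $ i - w $ j)^2 \<le> 4 * E k * K k / c" using c by (simp add: pos_le_divide_eq)
    hence "sqrt ((w $ i - w $ j)^2) \<le> g k" unfolding g_def by (rule real_sqrt_le_mono)
    thus ?thesis unfolding w_def by simp
  qed
  have "(g \<longlonglongrightarrow> sqrt (4 * ((Cw * sqrt (2 * Y) * 0 + Cw^2 / 2 * 0^2 + lam * n * (2 * Cw) * 0) / lam) * (Y / lam + n * Cw * 0) / c))"
    unfolding g_def E_def K_def by (intro tendsto_intros dn_lim, insert lam c, auto)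
  hence glim: "g \<longlonglongrightarrow> 0" by simp
  show ?thesis
  proof (rule tendsto_0_le[OF glim, of _ 1])
    show "\<forall>\<^sub>F k in sequentially. norm (ws k $ i - ws k $ j) \<le> norm (g k) * 1"
      using ev_col by eventually_elim (use per_k in \<open>force intro: order_trans[OF _ abs_ge_self]\<close>)
  qed
qed

end
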